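(* Let $J\subseteq S$ and $s\in S$. (1) If $s\in J$, then modulo $G_q(\emptyset)$, $\tau^+_Jt_s$ reduces to $(-1)^{\#J+1}q\tau^-_J$ and $\tau^-_Jt_s$ reduces to $(-1)^{\#J+1}\tau^+_J$. (2) If $s\notin J$ and $J''=\{j\in J\mid s<j\}$, then modulo $G_q(\emptyset)$, $\tau^+_Jt_s$ reduces to $(-1)^{\#J''}\tau^+_{J\cup\{s\}}+(-1)^{\#J+1}q\tau^-_J$ and $\tau^-_Jt_s$ reduces to $(-1)^{\#J''}\tau^-_{J\cup\{s\}}+(-1)^{\#J+1}\tau^+_J$.
   Context: $S$ is a finite set with a total order $<$, $R$ a commutative ring with $1$, $q\in R$, $A=R\langle t_s\mid s\in S\rangle$. For $J=\{j_1<\dots<j_{\#J}\}$, $t_J=t_{j_1}\cdots t_{j_{\#J}}$; for $I=\{j_{\alpha_1}<\dots<j_{\alpha_{\#I}}\}\subseteq J$, $\ell_J(I)=\sum_\nu(\alpha_\nu-\nu)$; $\tau^-_J=\sum_{I\subseteq J,\ \#I\text{ odd}}(-1)^{\ell_J(I)}(-q)^{(\#I-1)/2}t_{J\setminus I}$, $\tau^+_J=\sum_{I\subseteq J,\ \#I\text{ even}}(-1)^{\ell_J(I)}(-q)^{\#I/2}t_{J\setminus I}$. $G_q(\emptyset)=\{t_s^2-q: s\in S\}\cup\{t_rt_s+t_st_r-2q: s<r\}$, with leading monomials $t_s^2$ and $t_rt_s$ ($s<r$) for the degree lexicographic order (words compared by length, then lexicographically from the left). For a set $\mathcal I$ of elements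 with leading coefficient $1$, a reduction of $f$ modulo $\mathcal I$ replaces a term $c\,umv$ of $f$, where $m$ is the leading monomial of some $g\in\mathcal I$, by $c\,u(m-g)v$; $f$ reduces to $h$ if $h$ is obtained from $f$ by finitely many (possibly zero) reductions. *)

theory Defs
  imports "HOL-Library.Poly_Mapping"
begin

text \<open>The free algebra A = R<t_s | s in S>: finitely supported maps from words
  (lists of letters) to coefficients. The word [s1,...,sk] is the monomial t_s1...t_sk.\<close>

type_synonym ('s, 'r) ncpoly = "'s list \<Rightarrow>\<^sub>0 'r"

definition ncmult :: "('s, 'r::comm_ring_1) ncpoly \<Rightarrow> ('s, 'r) ncpoly \<Rightarrow> ('s, 'r) ncpoly"
    (infixl "\<cdot>" 70) where
  "p \<cdot> q = (\<Sum>u\<in>Poly_Mapping.keys p. \<Sum>v\<in>Poly_Mapping.keys q. Poly_Mapping.single (u @ v) (Poly_Mapping.lookup p u * Poly_Mapping.lookup q v))"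

definition scal :: "'r::comm_ring_1 \<Rightarrow> ('s, 'r) ncpoly \<Rightarrow> ('s, 'r) ncpoly" where
  "scal c p = Poly_Mapping.single [] c \<cdot> p"

definition gen :: "'s \<Rightarrow> ('s, 'r::comm_ring_1) ncpoly" where
  "gen s = Poly_Mapping.single [s] 1"

definition tJ :: "'s::linorder set \<Rightarrow> ('s, 'r::comm_ring_1) ncpoly" where
  "tJ J = Poly_Mapping.single (sorted_list_of_set J) 1"

text \<open>ell_J(I) = sum_nu (alpha_nu - nu), where alpha_nu is the position in J of the
  nu-th smallest element of I (position of i in J = #{j in J. j <= i}).\<close>
definition ellJ :: "'s::linorder set \<Rightarrow> 's set \<Rightarrow> nat" where
  "ellJ J I = (\<Sum>\<nu><card I. card {j\<in>J. j \<le> sorted_list_of_set I ! \<nu>} - (\<nu> + 1))"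

definition tau_minus :: "'r::comm_ring_1 \<Rightarrow> 's::linorder set \<Rightarrow> ('s, 'r) ncpoly" where
  "tau_minus q J = (\<Sum>I\<in>{I. I \<subseteq> J \<and> odd (card I)}.
      scal ((-1) ^ ellJ J I * (- q) ^ ((card I - 1) div 2)) (tJ (J - I)))"

definition tau_plus :: "'r::comm_ring_1 \<Rightarrow> 's::linorder set \<Rightarrow> ('s, 'r) ncpoly" where
  "tau_plus q J = (\<Sum>I\<in>{I. I \<subseteq> J \<and> even (card I)}.
      scal ((-1) ^ ellJ J I * (- q) ^ (card I div 2)) (tJ (J - I)))"

definition deglex_less :: "'s::linorder list \<Rightarrow> 's list \<Rightarrow> bool" where
  "deglex_less u v \<longleftrightarrow> length u < length v \<or> (length u = length v \<and> ord_class.lexordp u v)"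

definition lm :: "('s::linorder, 'r::comm_ring_1) ncpoly \<Rightarrow> 's list" where
  "lm g = (THE m. m \<in> Poly_Mapping.keys g \<and> (\<forall>w\<in>Poly_Mapping.keys g. w \<noteq> m \<longrightarrow> deglex_less w m))"

definition Gq_empty :: "'s::linorder set \<Rightarrow> 'r::comm_ring_1 \<Rightarrow> ('s, 'r) ncpoly set" where
  "Gq_empty S q = {gen s \<cdot> gen s - Poly_Mapping.single [] q | s. s \<in> S}
     \<union> {gen r \<cdot> gen s + gen s \<cdot> gen r - Poly_Mapping.single [] (2 * q) | r s. s \<in> S \<and> r \<in> S \<and> s < r}"

definition red1 :: "('s::linorder, 'r::comm_ring_1) ncpoly set \<Rightarrow> ('s, 'r) ncpoly \<Rightarrow> ('s, 'r) ncpoly \<Rightarrow> bool" where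
  "red1 G f h \<longleftrightarrow> (\<exists>g\<in>G. \<exists>u v. u @ lm g @ v \<in> Poly_Mapping.keys f \<and>
      h = f - Poly_Mapping.single (u @ lm g @ v) (Poly_Mapping.lookup f (u @ lm g @ v))
           + Poly_Mapping.single u (Poly_Mapping.lookup f (u @ lm g @ v)) \<cdot> (Poly_Mapping.single (lm g) 1 - g)
             \<cdot> Poly_Mapping.single v 1)"

definition reduces :: "('s::linorder, 'r::comm_ring_1) ncpoly set \<Rightarrow> ('s, 'r) ncpoly \<Rightarrow> ('s, 'r) ncpoly \<Rightarrow> bool" where
  "reduces G f h \<longleftrightarrow> (red1 G)\<^sup>*\<^sup>* f h"

end

theory Submission
  imports Defs
begin


lemma ncmult_expand:
  assumes "finite U" "finite V" "Poly_Mapping.keys p \<subseteq> U" "Poly_Mapping.keys q \<subseteq> V"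
  shows "p \<cdot> q = (\<Sum>u\<in>U. \<Sum>v\<in>V. Poly_Mapping.single (u @ v) (Poly_Mapping.lookup p u * Poly_Mapping.lookup q v))"
proof -
  have "p \<cdot> q = (\<Sum>u\<in>Poly_Mapping.keys p. \<Sum>v\<in>V. Poly_Mapping.single (u @ v) (Poly_Mapping.lookup p u * Poly_Mapping.lookup q v))"
    unfolding ncmult_def
    by (intro sum.cong refl sum.mono_neutral_left assms) (auto simp: in_keys_iff)
  also have "\<dots> = (\<Sum>u\<in>U. \<Sum>v\<in>V. Poly_Mapping.single (u @ v) (Poly_Mapping.lookup p u * Poly_Mapping.lookup q v))"
    by (intro sum.mono_neutral_left assms) (auto simp: in_keys_iff)
  finally show ?thesis .
qed

lemma ncmult_add_left: "(p + p') \<cdot> q = p \<cdot> q + p' \<cdot> q"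
proof -
  let ?U = "Poly_Mapping.keys p \<union> Poly_Mapping.keys p'"
  have k: "Poly_Mapping.keys (p + p') \<subseteq> ?U" by (rule keys_add)
  show ?thesis
    apply (subst ncmult_expand[OF _ _ k order_refl], simp, simp)
    apply (subst ncmult_expand[of ?U "Poly_Mapping.keys q" p], auto)
    apply (subst ncmult_expand[of ?U "Poly_Mapping.keys q" p'], auto)
    by (simp add: lookup_add distrib_right single_add sum.distrib)
qed

lemma ncmult_add_right: "q \<cdot> (p + p') = q \<cdot> p + q \<cdot> p'"
proof -
  let ?U = "Poly_Mapping.keys p \<union> Poly_Mapping.keys p'"
  have k: "Poly_Mapping.keys (p + p') \<subseteq> ?U" by (rule keys_add)
  show ?thesis
    apply (subst ncmult_expand[OF _ _ order_refl k], simp, simp)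
    apply (subst ncmult_expand[of "Poly_Mapping.keys q" ?U q p], auto)
    apply (subst ncmult_expand[of "Poly_Mapping.keys q" ?U q p'], auto)
    by (simp add: lookup_add distrib_left single_add sum.distrib)
qed

lemma ncmult_zero_left[simp]: "0 \<cdot> q = 0" by (simp add: ncmult_def)
lemma ncmult_zero_right[simp]: "q \<cdot> 0 = 0" by (simp add: ncmult_def)

lemma ncmult_uminus_left: "(- p) \<cdot> q = - (p \<cdot> q)"
proof -
  have "(p + - p) \<cdot> q = p \<cdot> q + (- p) \<cdot> q" by (rule ncmult_add_left)
  then have "p \<cdot> q + (- p) \<cdot> q = 0" by simp
  then show ?thesis by (metis add_eq_0_iff2 add.commute minus_unique)
qed

lemma ncmult_uminus_right: "q \<cdot> (- p) = - (q \<cdot> p)"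
proof -
  have "q \<cdot> (p + - p) = q \<cdot> p + q \<cdot> (- p)" by (rule ncmult_add_right)
  then have "q \<cdot> p + q \<cdot> (- p) = 0" by simp
  then show ?thesis by (metis minus_unique)
qed

lemma ncmult_diff_left: "(p - p') \<cdot> q = p \<cdot> q - p' \<cdot> q"
  unfolding diff_conv_add_uminus ncmult_add_left ncmult_uminus_left ..

lemma ncmult_diff_right: "q \<cdot> (p - p') = q \<cdot> p - q \<cdot> p'"
  unfolding diff_conv_add_uminus ncmult_add_right ncmult_uminus_right ..

lemma ncmult_sum_left: "(\<Sum>i\<in>A. f i) \<cdot> q = (\<Sum>i\<in>A. f i \<cdot> q)"
  by (induction A rule: infinite_finite_induct) (auto simp: ncmult_add_left)

lemma ncmult_single: "Poly_Mapping.single u a \<cdot> Poly_Mapping.single v b = Poly_Mapping.single (u @ v) (a * b)"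
  by (subst ncmult_expand[of "{u}" "{v}"]) auto

lemma lookup_scal: "Poly_Mapping.lookup (scal c p) w = c * Poly_Mapping.lookup p w"
proof -
  have "scal c p = (\<Sum>v\<in>Poly_Mapping.keys p. Poly_Mapping.single v (c * Poly_Mapping.lookup p v))"
    unfolding scal_def by (subst ncmult_expand[of "{[]}" "Poly_Mapping.keys p"]) auto
  then have "Poly_Mapping.lookup (scal c p) w = (\<Sum>v\<in>Poly_Mapping.keys p. (c * Poly_Mapping.lookup p v when v = w))"
    by (simp add: lookup_sum lookup_single)
  also have "\<dots> = c * Poly_Mapping.lookup p w"
    by (cases "w \<in> Poly_Mapping.keys p") (simp_all add: when_def not_in_keys_iff_lookup_eq_zero)
  finally show ?thesis .
qed


lemma scal_single: "scal c (Poly_Mapping.single w a) = Poly_Mapping.single w (c * a)"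
  by (rule poly_mapping_eqI) (simp add: lookup_scal lookup_single when_def)

lemma scal_add_left: "scal (a + b) p = scal a p + scal b p"
  by (rule poly_mapping_eqI) (simp add: lookup_scal lookup_add distrib_right)
lemma scal_add_right: "scal c (p + p') = scal c p + scal c p'"
  by (rule poly_mapping_eqI) (simp add: lookup_scal lookup_add distrib_left)
lemma scal_diff_right: "scal c (p - p') = scal c p - scal c p'"
  by (rule poly_mapping_eqI) (simp add: lookup_scal lookup_minus right_diff_distrib)
lemma scal_minus_right: "scal c (- p) = - scal c p"
  by (rule poly_mapping_eqI) (simp add: lookup_scal)
lemma scal_minus_left: "scal (- c) p = - scal c p"
  by (rule poly_mapping_eqI) (simp add: lookup_scal)
lemma scal_scal: "scal a (scal b p) = scal (a * b) p"
  by (rule poly_mapping_eqI) (simp add: lookup_scal mult.assoc)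
lemma scal_one[simp]: "scal 1 p = p"
  by (rule poly_mapping_eqI) (simp add: lookup_scal)
lemma scal_zero_left[simp]: "scal 0 p = 0"
  by (rule poly_mapping_eqI) (simp add: lookup_scal)
lemma scal_zero_right[simp]: "scal c 0 = 0"
  by (rule poly_mapping_eqI) (simp add: lookup_scal)
lemma scal_sum_left: "scal (\<Sum>i\<in>A. f i) p = (\<Sum>i\<in>A. scal (f i) p)"
  by (rule poly_mapping_eqI) (simp add: lookup_scal lookup_sum sum_distrib_right)
lemma scal_sum_right: "scal c (\<Sum>i\<in>A. f i) = (\<Sum>i\<in>A. scal c (f i))"
  by (rule poly_mapping_eqI) (simp add: lookup_scal lookup_sum sum_distrib_left)

lemma scal_tJ: "scal c (tJ K) = Poly_Mapping.single (sorted_list_of_set K) c"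
  by (simp add: tJ_def scal_single)

fun viol :: "'s::linorder list \<Rightarrow> ('s list \<times> 's \<times> 's \<times> 's list) option" where
  "viol (a # b # r) = (if b \<le> a then Some ([], a, b, r) else
     (case viol (b # r) of None \<Rightarrow> None | Some (u, x, y, v) \<Rightarrow> Some (a # u, x, y, v)))"
| "viol _ = None"

lemma viol_Some: "viol w = Some (u, a, b, v) \<Longrightarrow> w = u @ a # b # v \<and> b \<le> a"
  by (induction w arbitrary: u rule: viol.induct) (auto split: if_splits option.splits)

lemma viol_None: "viol w = None \<longleftrightarrow> sorted_wrt (<) w"
proof (induction w rule: viol.induct)
  case (1 a b r)
  show ?case
  proof (cases "b \<le> a")
    case True then show ?thesis by auto
  next
    case False
    then have "viol (a # b # r) = None \<longleftrightarrow> viol (b # r) = None" by (auto split: option.splits)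
    also have "\<dots> \<longleftrightarrow> sorted_wrt (<) (b # r)" using 1 False by simp
    also have "\<dots> \<longleftrightarrow> sorted_wrt (<) (a # b # r)" using False by (simp add: sorted_wrt2[OF transp_on_less] not_le) (blast intro: less_trans)
    finally show ?thesis .
  qed
qed auto

lemma viol_app: "sorted_wrt (<) (A0 @ [a]) \<Longrightarrow> s \<le> a \<Longrightarrow> viol (A0 @ a # s # B) = Some (A0, a, s, B)"
proof (induction A0)
  case Nil then show ?case by simp
next
  case (Cons x A0)
  then have IH: "viol (A0 @ a # s # B) = Some (A0, a, s, B)" by simp
  show ?case
  proof (cases A0)
    case Nil
    with Cons.prems show ?thesis by auto
  next
    case (Cons y A1)
    with Cons.prems have "x < y" by auto
    with Cons IH show ?thesis by auto
  qed
qed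

definition rank :: "'s::linorder set \<Rightarrow> 's \<Rightarrow> nat" where
  "rank S x = card {y\<in>S. y \<le> x}"

fun mu :: "'s::linorder set \<Rightarrow> 's list \<Rightarrow> nat" where
  "mu S [] = 0"
| "mu S (x # xs) = rank S x * 2 ^ length xs + mu S xs"

lemma mu_app_less: "length w \<le> length w' \<Longrightarrow> mu S w < mu S w' \<Longrightarrow> mu S (u @ w) < mu S (u @ w')"
proof (induction u)
  case (Cons x u)
  have "rank S x * 2 ^ (length u + length w) \<le> rank S x * 2 ^ (length u + length w')"
    using Cons.prems by (intro mult_le_mono2 power_increasing) auto
  moreover have "mu S (u @ w) < mu S (u @ w')" using Cons by simp
  ultimately have "rank S x * 2 ^ (length u + length w) + mu S (u @ w) < rank S x * 2 ^ (length u + length w') + mu S (u @ w')"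
    by (rule add_le_less_mono)
  then show ?case by simp
qed simp

lemma rank_less: "finite S \<Longrightarrow> a \<in> S \<Longrightarrow> b < a \<Longrightarrow> rank S b < rank S a"
  unfolding rank_def
proof (rule psubset_card_mono)
  assume "finite S" "a \<in> S" "b < a"
  then show "finite {y \<in> S. y \<le> a}" by simp
  have "a \<notin> {y \<in> S. y \<le> b}" using \<open>b < a\<close> by auto
  then show "{y \<in> S. y \<le> b} \<subset> {y \<in> S. y \<le> a}" using \<open>b < a\<close> \<open>a \<in> S\<close> by auto
qed

lemma rank_pos: "finite S \<Longrightarrow> a \<in> S \<Longrightarrow> 0 < rank S a"
  unfolding rank_def by (subst card_gt_0_iff) auto

lemma mu_swap: "finite S \<Longrightarrow> a \<in> S \<Longrightarrow> b < a \<Longrightarrow> mu S (b # a # v) < mu S (a # b # v)"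
proof -
  assume "finite S" "a \<in> S" "b < a"
  then have "rank S b < rank S a" by (rule rank_less)
  then have "rank S b * 2 ^ length v + rank S a * 2 ^ length v * 2 > 0 + 0" by simp
  have "rank S b * (2 * 2 ^ length v) + rank S a * 2 ^ length v < rank S a * (2 * 2 ^ length v) + rank S b * 2 ^ length v"
    using \<open>rank S b < rank S a\<close> by (simp add: algebra_simps)
  then show ?thesis by simp
qed

lemma mu_del: "finite S \<Longrightarrow> a \<in> S \<Longrightarrow> mu S v < mu S (a # b # v)"
  using rank_pos[of S a] by simp

lemma term1: "viol w = Some (u, a, b, v) \<Longrightarrow> finite S \<Longrightarrow> a \<in> S \<Longrightarrow> mu S (u @ v) < mu S w"
  using viol_Some[of w u a b v] by (auto intro!: mu_app_less mu_del)

lemma term2: "viol w = Some (u, a, b, v) \<Longrightarrow> finite S \<Longrightarrow> a \<in> S \<Longrightarrow> a \<noteq> b \<Longrightarrow> mu S (u @ b # a # v) < mu S w"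
  using viol_Some[of w u a b v] by (auto intro!: mu_app_less mu_swap)

function nf :: "'s::linorder set \<Rightarrow> 'r::comm_ring_1 \<Rightarrow> 's list \<Rightarrow> ('s, 'r) ncpoly" where
  "nf S q w = (case viol w of None \<Rightarrow> Poly_Mapping.single w 1
     | Some (u, a, b, v) \<Rightarrow> if finite S \<and> a \<in> S \<and> b \<in> S then
         (if a = b then scal q (nf S q (u @ v)) else scal (2 * q) (nf S q (u @ v)) - nf S q (u @ b # a # v))
       else Poly_Mapping.single w 1)"
  by pat_completeness auto
termination
  by (relation "measure (\<lambda>(S, q, w). mu S w)") (auto intro: term1 term2)

declare nf.simps[simp del]

lemma nf_normal: "sorted_wrt (<) w \<Longrightarrow> nf S q w = Poly_Mapping.single w 1"
  by (subst nf.simps) (simp add: viol_None[symmetric])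

lemma nf_step: "viol w = Some (u, a, b, v) \<Longrightarrow> finite S \<Longrightarrow> a \<in> S \<Longrightarrow> b \<in> S \<Longrightarrow>
  nf S q w = (if a = b then scal q (nf S q (u @ v)) else scal (2 * q) (nf S q (u @ v)) - nf S q (u @ b # a # v))"
  by (subst nf.simps) simp


definition NFL :: "'s::linorder set \<Rightarrow> 'r::comm_ring_1 \<Rightarrow> ('s, 'r) ncpoly \<Rightarrow> ('s, 'r) ncpoly" where
  "NFL S q f = (\<Sum>w\<in>Poly_Mapping.keys f. scal (Poly_Mapping.lookup f w) (nf S q w))"

lemma NFL_superset: "finite W \<Longrightarrow> Poly_Mapping.keys f \<subseteq> W \<Longrightarrow>
  NFL S q f = (\<Sum>w\<in>W. scal (Poly_Mapping.lookup f w) (nf S q w))"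
  unfolding NFL_def by (rule sum.mono_neutral_left) (auto simp: in_keys_iff)

lemma NFL_add: "NFL S q (f + g) = NFL S q f + NFL S q g"
proof -
  let ?W = "Poly_Mapping.keys f \<union> Poly_Mapping.keys g"
  have "NFL S q (f + g) = (\<Sum>w\<in>?W. scal (Poly_Mapping.lookup (f + g) w) (nf S q w))"
    by (rule NFL_superset) (use keys_add[of f g] in auto)
  also have "\<dots> = (\<Sum>w\<in>?W. scal (Poly_Mapping.lookup f w) (nf S q w)) + (\<Sum>w\<in>?W. scal (Poly_Mapping.lookup g w) (nf S q w))"
    by (simp add: lookup_add scal_add_left sum.distrib)
  also have "\<dots> = NFL S q f + NFL S q g"
    using NFL_superset[of ?W f S q] NFL_superset[of ?W g S q] by simp
  finally show ?thesis .
qed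

lemma NFL_zero[simp]: "NFL S q 0 = 0" by (simp add: NFL_def)

lemma NFL_uminus: "NFL S q (- f) = - NFL S q f"
proof -
  have "NFL S q (f + - f) = NFL S q f + NFL S q (- f)" by (rule NFL_add)
  then have "NFL S q f + NFL S q (- f) = 0" by simp
  then show ?thesis by (metis minus_unique)
qed

lemma NFL_diff: "NFL S q (f - g) = NFL S q f - NFL S q g"
  unfolding diff_conv_add_uminus NFL_add NFL_uminus ..

lemma NFL_sum: "NFL S q (\<Sum>i\<in>A. f i) = (\<Sum>i\<in>A. NFL S q (f i))"
  by (induction A rule: infinite_finite_induct) (auto simp: NFL_add)

lemma NFL_single: "NFL S q (Poly_Mapping.single w c) = scal c (nf S q w)"
  by (simp add: NFL_def)

lemma poly_sum_single: "(\<Sum>w\<in>Poly_Mapping.keys f. Poly_Mapping.single w (Poly_Mapping.lookup f w)) = f"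
proof (rule poly_mapping_eqI)
  fix x
  show "Poly_Mapping.lookup (\<Sum>w\<in>Poly_Mapping.keys f. Poly_Mapping.single w (Poly_Mapping.lookup f w)) x = Poly_Mapping.lookup f x"
    by (cases "x \<in> Poly_Mapping.keys f") (simp_all add: lookup_sum lookup_single when_def not_in_keys_iff_lookup_eq_zero)
qed

lemma NFL_normal: "(\<forall>w\<in>Poly_Mapping.keys f. sorted_wrt (<) w) \<Longrightarrow> NFL S q f = f"
  unfolding NFL_def
  by (subst (2) poly_sum_single[symmetric], rule sum.cong) (auto simp: nf_normal scal_single)

lemma lm_eqI:
  assumes "m \<in> Poly_Mapping.keys g" "\<And>w. w \<in> Poly_Mapping.keys g \<Longrightarrow> w \<noteq> m \<Longrightarrow> deglex_less w m"
    "\<And>w. w \<in> Poly_Mapping.keys g \<Longrightarrow> w \<noteq> m \<Longrightarrow> \<not> deglex_less m w"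
  shows "lm g = m"
  unfolding lm_def
proof (rule the_equality)
  show "m \<in> Poly_Mapping.keys g \<and> (\<forall>w\<in>Poly_Mapping.keys g. w \<noteq> m \<longrightarrow> deglex_less w m)"
    using assms(1,2) by simp
  fix m' assume h: "m' \<in> Poly_Mapping.keys g \<and> (\<forall>w\<in>Poly_Mapping.keys g. w \<noteq> m' \<longrightarrow> deglex_less w m')"
  show "m' = m"
  proof (rule ccontr)
    assume "m' \<noteq> m"
    have all: "\<forall>w\<in>Poly_Mapping.keys g. w \<noteq> m' \<longrightarrow> deglex_less w m'" using h by (rule conjunct2)
    have "deglex_less m m'" using bspec[OF all assms(1)] \<open>m' \<noteq> m\<close> by simp
    moreover have "m' \<in> Poly_Mapping.keys g" using h by (rule conjunct1)
    ultimately show False using assms(3)[of m'] \<open>m' \<noteq> m\<close> by simp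
  qed
qed

lemma gen_gen: "gen a \<cdot> gen b = Poly_Mapping.single [a, b] 1"
  by (simp add: gen_def ncmult_single)

lemma keys_single_sub: "Poly_Mapping.keys (Poly_Mapping.single k v) \<subseteq> {k}"
  by simp

lemma lm_sq:
  assumes "(1::'r::comm_ring_1) \<noteq> 0"
  shows "lm (gen a \<cdot> gen a - Poly_Mapping.single [] (q::'r)) = [a, a]"
proof (rule lm_eqI)
  let ?g = "gen a \<cdot> gen a - Poly_Mapping.single [] (q::'r)"
  have k: "Poly_Mapping.keys ?g \<subseteq> {[a, a], []}"
    unfolding gen_gen
    by (rule order_trans[OF keys_diff], rule order_trans[OF Un_mono[OF keys_single_sub keys_single_sub]]) auto
  show "[a, a] \<in> Poly_Mapping.keys ?g"
    unfolding in_keys_iff gen_gen using assms by (simp add: lookup_minus lookup_single)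
  show "\<And>w. w \<in> Poly_Mapping.keys ?g \<Longrightarrow> w \<noteq> [a, a] \<Longrightarrow> deglex_less w [a, a]"
    using k by (auto simp: deglex_less_def)
  show "\<And>w. w \<in> Poly_Mapping.keys ?g \<Longrightarrow> w \<noteq> [a, a] \<Longrightarrow> \<not> deglex_less [a, a] w"
    using k by (auto simp: deglex_less_def)
qed

lemma lm_comm:
  assumes "(1::'r::comm_ring_1) \<noteq> 0" "b < a"
  shows "lm (gen a \<cdot> gen b + gen b \<cdot> gen a - Poly_Mapping.single [] (2 * (q::'r))) = [a, b]"
proof (rule lm_eqI)
  let ?g = "gen a \<cdot> gen b + gen b \<cdot> gen a - Poly_Mapping.single [] (2 * (q::'r))"
  have k: "Poly_Mapping.keys ?g \<subseteq> {[a, b], [b, a], []}"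
    unfolding gen_gen
    by (rule order_trans[OF keys_diff], rule order_trans[OF Un_mono[OF keys_add keys_single_sub]],
        rule order_trans[OF Un_mono[OF Un_mono[OF keys_single_sub keys_single_sub] order_refl]]) auto
  show "[a, b] \<in> Poly_Mapping.keys ?g"
    unfolding in_keys_iff gen_gen using assms by (simp add: lookup_minus lookup_add lookup_single)
  show "\<And>w. w \<in> Poly_Mapping.keys ?g \<Longrightarrow> w \<noteq> [a, b] \<Longrightarrow> deglex_less w [a, b]"
    using k assms by (auto simp: deglex_less_def)
  show "\<And>w. w \<in> Poly_Mapping.keys ?g \<Longrightarrow> w \<noteq> [a, b] \<Longrightarrow> \<not> deglex_less [a, b] w"
    using k assms by (auto simp: deglex_less_def)
qed


definition Msum :: "'s::linorder set \<Rightarrow> ('s, 'r::comm_ring_1) ncpoly \<Rightarrow> nat" where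
  "Msum S f = (\<Sum>w\<in>Poly_Mapping.keys f. (3::nat) ^ mu S w)"

lemma Msum_less:
  assumes "Poly_Mapping.keys h \<subseteq> (Poly_Mapping.keys f - {w}) \<union> N" "w \<in> Poly_Mapping.keys f"
    "finite N" "card N \<le> 2" "\<And>x. x \<in> N \<Longrightarrow> mu S x < mu S w"
  shows "Msum S h < Msum S f"
proof -
  let ?g = "\<lambda>x. (3::nat) ^ mu S x"
  let ?F = "Poly_Mapping.keys f - {w}"
  have "Msum S h \<le> sum ?g (?F \<union> N)"
    unfolding Msum_def by (rule sum_mono2) (use assms in auto)
  also have "\<dots> \<le> sum ?g ?F + sum ?g N"
    using sum.union_inter[of ?F N ?g] assms(3) by simp
  also have "sum ?g N < ?g w"
  proof -
    have "3 * sum ?g N = (\<Sum>x\<in>N. 3 ^ Suc (mu S x))" by (simp add: sum_distrib_left)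
    also have "\<dots> \<le> (\<Sum>x\<in>N. ?g w)"
      by (rule sum_mono, rule power_increasing) (use assms(5) in \<open>auto simp: Suc_le_eq\<close>)
    also have "\<dots> = card N * ?g w" by simp
    also have "\<dots> \<le> 2 * ?g w" using assms(4) by simp
    finally have "3 * sum ?g N \<le> 2 * ?g w" .
    moreover have "?g w > 0" by simp
    ultimately show ?thesis by linarith
  qed
  then have "sum ?g ?F + sum ?g N < sum ?g ?F + ?g w" by simp
  also have "\<dots> = Msum S f"
    unfolding Msum_def using assms(2) by (simp add: sum.remove)
  finally show ?thesis by simp
qed

lemma reduce_nf:
  assumes S: "finite S" and one: "(1::'r::comm_ring_1) \<noteq> 0"
  shows "(\<forall>w\<in>Poly_Mapping.keys f. set w \<subseteq> S) \<Longrightarrow> reduces (Gq_empty S q) f (NFL S q (f :: ('s::linorder, 'r) ncpoly))"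
proof (induction "Msum S f" arbitrary: f rule: less_induct)
  case less
  show ?case
  proof (cases "\<forall>w\<in>Poly_Mapping.keys f. sorted_wrt (<) w")
    case True
    then show ?thesis by (simp add: NFL_normal reduces_def)
  next
    case False
    then obtain w where w: "w \<in> Poly_Mapping.keys f" "\<not> sorted_wrt (<) w" by auto
    then obtain u a b v where vw: "viol w = Some (u, a, b, v)"
      using viol_None[of w] by (cases "viol w") auto
    then have weq: "w = u @ a # b # v" and ba: "b \<le> a" using viol_Some[of w u a b v] by auto
    have wS: "set w \<subseteq> S" using less.prems w(1) by simp
    then have ab: "a \<in> S" "b \<in> S" using weq by auto
    define c where "c = Poly_Mapping.lookup f w"
    have cnz: "c \<noteq> 0" using w(1) unfolding c_def in_keys_iff .
    show ?thesis
    proof (cases "a = b")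
      case True
      define g where "g = gen a \<cdot> gen a - Poly_Mapping.single [] q"
      have gG: "g \<in> Gq_empty S q" unfolding g_def Gq_empty_def using ab by blast
      have lmg: "lm g = [a, a]" unfolding g_def by (rule lm_sq[OF one])
      define h where "h = f - Poly_Mapping.single w c + Poly_Mapping.single (u @ v) (c * q)"
      have mg: "Poly_Mapping.single (lm g) 1 - g = Poly_Mapping.single [] q"
        unfolding lmg by (simp add: g_def gen_gen)
      have red: "red1 (Gq_empty S q) f h"
        unfolding red1_def
      proof (intro bexI exI conjI)
        show "u @ lm g @ v \<in> Poly_Mapping.keys f" using w weq True lmg by simp
        show "h = f - Poly_Mapping.single (u @ lm g @ v) (Poly_Mapping.lookup f (u @ lm g @ v)) +
          Poly_Mapping.single u (Poly_Mapping.lookup f (u @ lm g @ v)) \<cdot> (Poly_Mapping.single (lm g) 1 - g) \<cdot> Poly_Mapping.single v 1"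
          unfolding mg ncmult_single h_def c_def using weq True lmg by simp
      qed (rule gG)
      have kh: "Poly_Mapping.keys h \<subseteq> (Poly_Mapping.keys f - {w}) \<union> {u @ v}"
      proof
        fix x assume x: "x \<in> Poly_Mapping.keys h"
        have "u @ v \<noteq> w" proof
          assume "u @ v = w"
          then have "length (u @ v) = length w" by simp
          then show False using weq by simp
        qed
        then show "x \<in> (Poly_Mapping.keys f - {w}) \<union> {u @ v}"
          using x unfolding h_def in_keys_iff
          by (auto simp: lookup_add lookup_minus lookup_single when_def c_def in_keys_iff split: if_splits)
      qed
      have "Msum S h < Msum S f"
        by (rule Msum_less[OF kh w(1)]) (use term1[OF vw S ab(1)] weq in auto)
      moreover have "\<forall>x\<in>Poly_Mapping.keys h. set x \<subseteq> S"
      proof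
        fix x assume "x \<in> Poly_Mapping.keys h"
        with kh have "x \<in> Poly_Mapping.keys f \<or> x = u @ v" by auto
        then show "set x \<subseteq> S" using less.prems wS weq by auto
      qed
      ultimately have "reduces (Gq_empty S q) h (NFL S q h)" by (rule less.hyps)
      moreover have "NFL S q h = NFL S q f"
        unfolding h_def NFL_add NFL_diff NFL_single
        using nf_step[OF vw S ab, of q] True by (simp add: scal_scal)
      ultimately show ?thesis using red unfolding reduces_def
        by (metis converse_rtranclp_into_rtranclp)
    next
      case False
      then have ba': "b < a" using ba by simp
      define g where "g = gen a \<cdot> gen b + gen b \<cdot> gen a - Poly_Mapping.single [] (2 * q)"
      have gG: "g \<in> Gq_empty S q" unfolding g_def Gq_empty_def using ab ba' by blast
      have lmg: "lm g = [a, b]" unfolding g_def by (rule lm_comm[OF one ba'])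
      define h where "h = f - Poly_Mapping.single w c + Poly_Mapping.single (u @ v) (c * (2 * q))
          - Poly_Mapping.single (u @ b # a # v) c"
      have mg: "Poly_Mapping.single (lm g) 1 - g = Poly_Mapping.single [] (2 * q) - Poly_Mapping.single [b, a] 1"
        unfolding lmg by (simp add: g_def gen_gen)
      have red: "red1 (Gq_empty S q) f h"
        unfolding red1_def
      proof (intro bexI exI conjI)
        show "u @ lm g @ v \<in> Poly_Mapping.keys f" using w weq lmg by simp
        show "h = f - Poly_Mapping.single (u @ lm g @ v) (Poly_Mapping.lookup f (u @ lm g @ v)) +
          Poly_Mapping.single u (Poly_Mapping.lookup f (u @ lm g @ v)) \<cdot> (Poly_Mapping.single (lm g) 1 - g) \<cdot> Poly_Mapping.single v 1"
          unfolding mg ncmult_diff_right ncmult_diff_left ncmult_single h_def c_def using weq lmg by simp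
      qed (rule gG)
      have kh: "Poly_Mapping.keys h \<subseteq> (Poly_Mapping.keys f - {w}) \<union> {u @ v, u @ b # a # v}"
      proof
        fix x assume x: "x \<in> Poly_Mapping.keys h"
        have "u @ v \<noteq> w" proof
          assume "u @ v = w"
          then have "length (u @ v) = length w" by simp
          then show False using weq by simp
        qed
        moreover have "u @ b # a # v \<noteq> w" using weq False by simp
        ultimately show "x \<in> (Poly_Mapping.keys f - {w}) \<union> {u @ v, u @ b # a # v}"
          using x unfolding h_def in_keys_iff
          by (auto simp: lookup_add lookup_minus lookup_single when_def c_def in_keys_iff split: if_splits)
      qed
      have "Msum S h < Msum S f"
        by (rule Msum_less[OF kh w(1)]) (use term1[OF vw S ab(1)] term2[OF vw S ab(1) False] weq in \<open>auto simp: card_insert_if\<close>)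
      moreover have "\<forall>x\<in>Poly_Mapping.keys h. set x \<subseteq> S"
      proof
        fix x assume "x \<in> Poly_Mapping.keys h"
        with kh have "x \<in> Poly_Mapping.keys f \<or> x = u @ v \<or> x = u @ b # a # v" by auto
        then show "set x \<subseteq> S" using less.prems wS weq by auto
      qed
      ultimately have "reduces (Gq_empty S q) h (NFL S q h)" by (rule less.hyps)
      moreover have "NFL S q h = NFL S q f"
        unfolding h_def NFL_add NFL_diff NFL_single
        using nf_step[OF vw S ab, of q] False by (simp add: scal_scal scal_diff_right)
      ultimately show ?thesis using red unfolding reduces_def
        by (metis converse_rtranclp_into_rtranclp)
    qed
  qed
qed



lemma ssl: "sorted_wrt (<) xs \<Longrightarrow> sorted_list_of_set (set xs) = xs"
  by (simp add: sorted_list_of_set_sort_remdups strict_sorted_iff distinct_remdups_id sorted_sort_id)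

lemma tJ_set: "sorted_wrt (<) xs \<Longrightarrow> tJ (set xs) = Poly_Mapping.single xs 1"
  by (simp add: tJ_def ssl)

definition Wd :: "'s::linorder \<Rightarrow> 's set \<Rightarrow> 's set \<Rightarrow> ('s, 'r::comm_ring_1) ncpoly" where
  "Wd s A B = (if s \<in> A then 0 else scal ((-1) ^ card {x\<in>A. s < x}) (tJ (insert s (A \<union> B))))"

definition Ct :: "'r::comm_ring_1 \<Rightarrow> 's::linorder \<Rightarrow> 's set \<Rightarrow> 's set \<Rightarrow> ('s, 'r) ncpoly" where
  "Ct q s A B = (\<Sum>k\<in>{k\<in>A. s \<le> k}. scal ((-1) ^ card {x\<in>A. k < x} * (if k = s then q else 2 * q)) (tJ ((A \<union> B) - {k})))"

lemma bub:
  assumes S: "finite S" "s \<in> S"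
  shows "set A \<subseteq> S \<Longrightarrow> sorted_wrt (<) (A @ B) \<Longrightarrow> \<forall>b\<in>set B. s < b \<Longrightarrow>
    nf S q (A @ s # B) = Wd s (set A) (set B) + Ct q s (set A) (set B)"
proof (induction A arbitrary: B rule: rev_induct)
  case Nil
  then have "sorted_wrt (<) (s # B)" by simp
  then show ?case
    by (simp add: nf_normal Wd_def Ct_def tJ_set[symmetric])
next
  case (snoc a A0)
  have sA: "sorted_wrt (<) (A0 @ [a])" and sAB: "sorted_wrt (<) (A0 @ a # B)"
    using snoc.prems(2) by (auto simp: sorted_wrt_append)
  have A0a: "\<forall>x\<in>set A0. x < a" using sA by (simp add: sorted_wrt_append)
  have aB: "\<forall>x\<in>set B. a < x" using snoc.prems(2) by (simp add: sorted_wrt_append)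
  have A0B: "sorted_wrt (<) (A0 @ B)" using snoc.prems(2) by (simp add: sorted_wrt_append)
  have aS: "a \<in> S" using snoc.prems(1) by simp
  consider "a < s" | "a = s" | "s < a" by fastforce
  then show ?case
  proof cases
    case 1
    have sorted: "sorted_wrt (<) ((A0 @ [a]) @ s # B)"
      using snoc.prems(2,3) 1 A0a by (auto simp: sorted_wrt_append)
    have e1: "{k \<in> set (A0 @ [a]). s \<le> k} = {}" using 1 A0a by auto
    have e2: "{x \<in> set (A0 @ [a]). s < x} = {}" using 1 A0a by auto
    have e3: "s \<notin> set (A0 @ [a])" using 1 A0a by auto
    have "insert s (set (A0 @ [a]) \<union> set B) = set ((A0 @ [a]) @ s # B)" by auto
    then show ?thesis using sorted
      by (simp add: nf_normal Wd_def Ct_def e1 e2 e3 tJ_set del: set_append append_assoc)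
  next
    case 2
    have v: "viol (A0 @ a # s # B) = Some (A0, a, s, B)" using viol_app[OF sA] 2 by simp
    have "nf S q (A0 @ a # s # B) = scal q (nf S q (A0 @ B))"
      using nf_step[OF v S(1) aS S(2)] 2 by simp
    also have "\<dots> = scal q (tJ (set (A0 @ B)))" using A0B by (simp add: nf_normal tJ_set del: set_append)
    finally have lhs: "nf S q ((A0 @ [a]) @ s # B) = scal q (tJ (set (A0 @ B)))" by simp
    have e1: "{k \<in> set (A0 @ [a]). s \<le> k} = {s}" using 2 A0a by auto
    have e2: "{x \<in> set (A0 @ [a]). s < x} = {}" using 2 A0a by auto
    have e4: "set (A0 @ [a]) \<union> set B - {s} = set (A0 @ B)" using 2 A0a aB by auto
    have "Ct q s (set (A0 @ [a])) (set B) = scal ((-1) ^ card {x\<in>set (A0 @ [a]). s < x} * q) (tJ (set (A0 @ [a]) \<union> set B - {s}))"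
      unfolding Ct_def e1 by simp
    also have "\<dots> = scal q (tJ (set (A0 @ B)))" unfolding e2 e4 by simp
    finally have C: "Ct q s (set (A0 @ [a])) (set B) = scal q (tJ (set (A0 @ B)))" .
    have W: "Wd s (set (A0 @ [a])) (set B) = 0" unfolding Wd_def using 2 by simp
    show ?thesis unfolding lhs W C by simp
  next
    case 3
    have v: "viol (A0 @ a # s # B) = Some (A0, a, s, B)" using viol_app[OF sA] 3 by simp
    have IH: "nf S q (A0 @ s # (a # B)) = Wd s (set A0) (set (a # B)) + Ct q s (set A0) (set (a # B))"
      by (rule snoc.IH) (use snoc.prems sAB 3 aB in auto)
    have "nf S q (A0 @ a # s # B) = scal (2 * q) (nf S q (A0 @ B)) - nf S q (A0 @ s # a # B)"
      using nf_step[OF v S(1) aS S(2), of q] 3 by (simp add: less_imp_neq[symmetric])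
    also have "\<dots> = scal (2 * q) (tJ (set (A0 @ B))) - (Wd s (set A0) (set (a # B)) + Ct q s (set A0) (set (a # B)))"
      using A0B IH by (simp add: nf_normal tJ_set del: set_append)
    finally have lhs: "nf S q ((A0 @ [a]) @ s # B) = scal (2 * q) (tJ (set (A0 @ B))) - (Wd s (set A0) (set (a # B)) + Ct q s (set A0) (set (a # B)))"
      by simp
    have aA0: "a \<notin> set A0" using A0a by auto
    have W: "Wd s (set (A0 @ [a])) (set B) = - Wd s (set A0) (set (a # B))"
    proof -
      have c: "{x \<in> set (A0 @ [a]). s < x} = insert a {x \<in> set A0. s < x}" using 3 by auto
      have "card {x \<in> set (A0 @ [a]). s < x} = Suc (card {x \<in> set A0. s < x})"
        unfolding c using aA0 by simp
      moreover have "insert s (set (A0 @ [a]) \<union> set B) = insert s (set A0 \<union> set (a # B))" by auto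
      moreover have "s \<in> set (A0 @ [a]) \<longleftrightarrow> s \<in> set A0" using 3 by auto
      ultimately show ?thesis unfolding Wd_def by (simp add: scal_minus_left)
    qed
    have C: "Ct q s (set (A0 @ [a])) (set B) = scal (2 * q) (tJ (set (A0 @ B))) - Ct q s (set A0) (set (a # B))"
    proof -
      have e1: "{k \<in> set (A0 @ [a]). s \<le> k} = insert a {k \<in> set A0. s \<le> k}" using 3 by auto
      have fin: "finite {k \<in> set A0. s \<le> k}" by simp
      have ea: "{x \<in> set (A0 @ [a]). a < x} = {}" using A0a by auto
      have e5: "set (A0 @ [a]) \<union> set B - {a} = set (A0 @ B)" using A0a aB aA0 by auto
      have rest: "\<And>k. k \<in> {k \<in> set A0. s \<le> k} \<Longrightarrow>
          scal ((-1) ^ card {x \<in> set (A0 @ [a]). k < x} * (if k = s then q else 2 * q)) (tJ (set (A0 @ [a]) \<union> set B - {k}))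
        = - scal ((-1) ^ card {x \<in> set A0. k < x} * (if k = s then q else 2 * q)) (tJ (set A0 \<union> set (a # B) - {k}))"
      proof -
        fix k assume k: "k \<in> {k \<in> set A0. s \<le> k}"
        then have ka: "k < a" using A0a by auto
        have c: "{x \<in> set (A0 @ [a]). k < x} = insert a {x \<in> set A0. k < x}" using ka by auto
        have "card {x \<in> set (A0 @ [a]). k < x} = Suc (card {x \<in> set A0. k < x})"
          unfolding c using aA0 by simp
        moreover have "set (A0 @ [a]) \<union> set B - {k} = set A0 \<union> set (a # B) - {k}" by auto
        ultimately show "?thesis k" by (simp add: scal_minus_left)
      qed
      define F where "F = (\<lambda>k. scal ((-1) ^ card {x \<in> set (A0 @ [a]). k < x} * (if k = s then q else 2 * q)) (tJ (set (A0 @ [a]) \<union> set B - {k})))"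
      have "Ct q s (set (A0 @ [a])) (set B) = sum F (insert a {k \<in> set A0. s \<le> k})"
        unfolding Ct_def e1 F_def ..
      also have "\<dots> = F a + sum F {k \<in> set A0. s \<le> k}"
        by (rule sum.insert[OF fin]) (use aA0 in simp)
      also have "F a = scal (2 * q) (tJ (set (A0 @ B)))"
        unfolding F_def ea e5 using 3 by (simp add: less_imp_neq[symmetric])
      also have "sum F {k \<in> set A0. s \<le> k} = (\<Sum>k\<in>{k \<in> set A0. s \<le> k}. - scal ((-1) ^ card {x \<in> set A0. k < x} * (if k = s then q else 2 * q)) (tJ (set A0 \<union> set (a # B) - {k})))"
        unfolding F_def by (rule sum.cong[OF refl rest])
      also have "\<dots> = - Ct q s (set A0) (set (a # B))"
        unfolding Ct_def by (simp add: sum_negf)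
      finally show ?thesis by simp
    qed
    show ?thesis unfolding lhs W C by (simp add: algebra_simps)
  qed
qed


definition ell2 :: "'s::linorder set \<Rightarrow> 's set \<Rightarrow> nat" where
  "ell2 J I = (\<Sum>i\<in>I. card {j\<in>J - I. j < i})"

lemma card_le_nth:
  assumes "finite I" "\<nu> < card I"
  shows "card {j\<in>I. j \<le> sorted_list_of_set I ! \<nu>} = Suc \<nu>"
proof -
  let ?L = "sorted_list_of_set I"
  have sL: "sorted_wrt (<) ?L" by (rule strict_sorted_list_of_set)
  have lL: "length ?L = card I" by simp
  have setL: "set ?L = I" using assms(1) by (rule set_sorted_list_of_set)
  have dL: "distinct ?L" by (rule distinct_sorted_list_of_set)
  have eq: "{j\<in>I. j \<le> ?L ! \<nu>} = (!) ?L ` {..\<nu>}"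
  proof (intro equalityI subsetI)
    fix j assume j: "j \<in> {j\<in>I. j \<le> ?L ! \<nu>}"
    have "j \<in> set ?L" using setL j by simp
    then obtain i where i: "i < length ?L" "j = ?L ! i" by (auto simp: in_set_conv_nth)
    have "i \<le> \<nu>"
    proof (rule ccontr)
      assume "\<not> i \<le> \<nu>"
      then have lt: "?L ! \<nu> < ?L ! i" using sorted_wrt_nth_less[OF sL, of \<nu> i] i by simp
      have "?L ! i \<le> ?L ! \<nu>" using j i by simp
      then show False using lt by simp
    qed
    then show "j \<in> (!) ?L ` {..\<nu>}" using i by auto
  next
    fix j assume "j \<in> (!) ?L ` {..\<nu>}"
    then obtain i where i: "i \<le> \<nu>" "j = ?L ! i" by auto
    have il: "i < length ?L" using i assms lL by simp
    have "j \<in> I" using nth_mem[OF il] i setL by simp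
    moreover have "j \<le> ?L ! \<nu>"
    proof (cases "i = \<nu>")
      case False
      then have "i < \<nu>" using i by simp
      then show ?thesis using sorted_wrt_nth_less[OF sL, of i \<nu>] i assms lL by simp
    qed (use i in simp)
    ultimately show "j \<in> {j\<in>I. j \<le> ?L ! \<nu>}" by simp
  qed
  have "inj_on ((!) ?L) {..\<nu>}"
    using dL assms lL by (auto simp: inj_on_def nth_eq_iff_index_eq)
  then show ?thesis unfolding eq by (simp add: card_image)
qed

lemma ellJ_ell2:
  assumes "finite J" "I \<subseteq> J"
  shows "ellJ J I = ell2 J I"
proof -
  have fI: "finite I" using assms finite_subset by blast
  let ?L = "sorted_list_of_set I"
  have lL: "length ?L = card I" by simp
  have setL: "set ?L = I" using fI by (rule set_sorted_list_of_set)
  have dL: "distinct ?L" by (rule distinct_sorted_list_of_set)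
  have trm: "card {j\<in>J. j \<le> ?L ! \<nu>} - (\<nu> + 1) = card {j\<in>J - I. j < ?L ! \<nu>}" if nu: "\<nu> < card I" for \<nu>
  proof -
    have x: "?L ! \<nu> \<in> I" using nu lL setL nth_mem by metis
    have "{j\<in>J. j \<le> ?L ! \<nu>} = {j\<in>J - I. j < ?L ! \<nu>} \<union> {j\<in>I. j \<le> ?L ! \<nu>}"
    proof (intro equalityI subsetI)
      fix y assume y: "y \<in> {j\<in>J. j \<le> ?L ! \<nu>}"
      show "y \<in> {j\<in>J - I. j < ?L ! \<nu>} \<union> {j\<in>I. j \<le> ?L ! \<nu>}"
      proof (cases "y \<in> I")
        case False
        then have "y \<noteq> ?L ! \<nu>" using x by metis
        then show ?thesis using y False by (simp add: order.strict_iff_order)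
      qed (use y in simp)
    qed (use assms(2) x in auto)
    moreover have "{j\<in>J - I. j < ?L ! \<nu>} \<inter> {j\<in>I. j \<le> ?L ! \<nu>} = {}" by auto
    ultimately have "card {j\<in>J. j \<le> ?L ! \<nu>} = card {j\<in>J - I. j < ?L ! \<nu>} + card {j\<in>I. j \<le> ?L ! \<nu>}"
      using assms(1) fI by (simp add: card_Un_disjoint)
    then show ?thesis using card_le_nth[OF fI nu] by simp
  qed
  have "ellJ J I = (\<Sum>\<nu><card I. card {j\<in>J - I. j < ?L ! \<nu>})"
    unfolding ellJ_def using trm by (intro sum.cong) auto
  also have "\<dots> = (\<Sum>i\<in>I. card {j\<in>J - I. j < i})"
    by (rule sum.reindex_bij_betw[OF bij_betw_nth[OF dL]]) (use lL setL in \<open>auto simp: lessThan_def\<close>)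
  finally show ?thesis unfolding ell2_def .
qed

lemma E1:
  assumes "finite J" "s \<notin> J" "I \<subseteq> J"
  shows "ell2 (insert s J) I = ell2 J I + card {i\<in>I. s < i}"
proof -
  have fI: "finite I" using assms finite_subset by blast
  have "ell2 (insert s J) I = (\<Sum>i\<in>I. card {j\<in>J - I. j < i} + (if s < i then 1 else 0))"
    unfolding ell2_def
  proof (rule sum.cong[OF refl])
    fix i assume "i \<in> I"
    have sI: "s \<notin> I" using assms by auto
    show "card {j \<in> insert s J - I. j < i} = card {j\<in>J - I. j < i} + (if s < i then 1 else 0)"
    proof (cases "s < i")
      case True
      then have "{j \<in> insert s J - I. j < i} = insert s {j\<in>J - I. j < i}" using sI by auto
      then show ?thesis using True assms by simp
    next
      case False
      then have "{j \<in> insert s J - I. j < i} = {j\<in>J - I. j < i}" using sI by auto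
      then show ?thesis using False by simp
    qed
  qed
  also have "\<dots> = ell2 J I + card {i\<in>I. s < i}"
    unfolding ell2_def sum.distrib using fI by (simp add: sum.If_cases Int_def)
  finally show ?thesis .
qed

lemma E2:
  assumes "finite J" "s \<notin> J" "I \<subseteq> J"
  shows "ell2 (insert s J) (insert s I) = ell2 J I + card {j\<in>J - I. j < s}"
proof -
  have fI: "finite I" using assms finite_subset by blast
  have sI: "s \<notin> I" using assms by auto
  have c: "insert s J - insert s I = J - I" using assms by auto
  show ?thesis unfolding ell2_def c using fI sI by (simp add: add.commute)
qed

lemma E3:
  assumes "finite J" "I \<subseteq> J" "k \<in> I"
  shows "ell2 J I + card {i\<in>I. k < i} = ell2 J (I - {k}) + card {j\<in>J - I. j < k}"
proof -
  have fI: "finite I" using assms finite_subset by blast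
  have c: "J - (I - {k}) = insert k (J - I)" using assms by auto
  have "ell2 J (I - {k}) = (\<Sum>i\<in>I - {k}. card {j\<in>J - I. j < i} + (if k < i then 1 else 0))"
    unfolding ell2_def c
  proof (rule sum.cong[OF refl])
    fix i assume i: "i \<in> I - {k}"
    show "card {j \<in> insert k (J - I). j < i} = card {j\<in>J - I. j < i} + (if k < i then 1 else 0)"
    proof (cases "k < i")
      case True
      then have "{j \<in> insert k (J - I). j < i} = insert k {j\<in>J - I. j < i}" by auto
      then show ?thesis using True assms by simp
    next
      case False
      then have "{j \<in> insert k (J - I). j < i} = {j\<in>J - I. j < i}" by auto
      then show ?thesis using False by simp
    qed
  qed
  also have "\<dots> = (\<Sum>i\<in>I - {k}. card {j\<in>J - I. j < i}) + card {i\<in>I. k < i}"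
  proof -
    have "{i \<in> I - {k}. k < i} = {i\<in>I. k < i}" by auto
    then show ?thesis unfolding sum.distrib using fI by (simp add: sum.If_cases Int_def)
  qed
  finally have a: "ell2 J (I - {k}) = (\<Sum>i\<in>I - {k}. card {j\<in>J - I. j < i}) + card {i\<in>I. k < i}" .
  have b: "ell2 J I = (\<Sum>i\<in>I - {k}. card {j\<in>J - I. j < i}) + card {j\<in>J - I. j < k}"
    unfolding ell2_def using fI assms(3) by (simp add: sum.remove)
  show ?thesis using a b by simp
qed

lemma ALT:
  "finite (X::'b::linorder set) \<Longrightarrow> (\<Sum>k\<in>X. (-1::'a::comm_ring_1) ^ card {x\<in>X. k < x}) = (if odd (card X) then 1 else 0)"
proof (induction "card X" arbitrary: X)
  case 0
  then show ?case by simp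
next
  case (Suc n)
  then have ne: "X \<noteq> {}" by auto
  define m where "m = Max X"
  have mX: "m \<in> X" using Suc.prems ne m_def by simp
  have mmax: "\<And>x. x \<in> X \<Longrightarrow> x \<le> m" using Suc.prems m_def by simp
  let ?Y = "X - {m}"
  have cY: "card ?Y = n" using Suc.hyps(2) mX Suc.prems by simp
  have "(\<Sum>k\<in>X. (-1::'a) ^ card {x\<in>X. k < x}) = (-1) ^ card {x\<in>X. m < x} + (\<Sum>k\<in>?Y. (-1) ^ card {x\<in>X. k < x})"
    using Suc.prems mX by (simp add: sum.remove)
  also have "card {x\<in>X. m < x} = 0" using mmax Suc.prems by (auto simp: not_less[symmetric])
  also have "(\<Sum>k\<in>?Y. (-1::'a) ^ card {x\<in>X. k < x}) = (\<Sum>k\<in>?Y. - ((-1) ^ card {x\<in>?Y. k < x}))"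
  proof (rule sum.cong[OF refl])
    fix k assume k: "k \<in> ?Y"
    then have km: "k < m" using mmax by (simp add: order.not_eq_order_implies_strict)
    have "{x\<in>X. k < x} = insert m {x\<in>?Y. k < x}" using km mX by auto
    then have "card {x\<in>X. k < x} = Suc (card {x\<in>?Y. k < x})" using Suc.prems by simp
    then show "(-1::'a) ^ card {x\<in>X. k < x} = - ((-1) ^ card {x\<in>?Y. k < x})" by simp
  qed
  also have "\<dots> = - (if odd n then 1 else 0)"
    using Suc.hyps(1)[of ?Y] cY Suc.prems by (simp add: sum_negf)
  finally show ?case by (simp add: Suc.hyps(2)[symmetric])
qed

lemma m1_eq: "A + 2 * y = B + 2 * z \<Longrightarrow> (-1::'a::comm_ring_1) ^ A = (-1) ^ B"
proof -
  assume h: "A + 2 * y = B + 2 * z"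
  have "(-1::'a) ^ A = (-1) ^ (A + 2 * y)" by (simp add: power_add power_mult)
  also have "\<dots> = (-1) ^ (B + 2 * z)" by (simp only: h)
  also have "\<dots> = (-1) ^ B" by (simp add: power_add power_mult)
  finally show ?thesis .
qed


definition cf :: "'r::comm_ring_1 \<Rightarrow> 's::linorder set \<Rightarrow> 's set \<Rightarrow> 'r" where
  "cf q J I = (-1) ^ ell2 J I * (- q) ^ (card I div 2)"

lemma SG:
  assumes "finite J" "I0 \<subseteq> J" "k \<in> I0"
  shows "(-1::'r::comm_ring_1) ^ ell2 J (I0 - {k}) * (-1) ^ card {x\<in>J - (I0 - {k}). k < x}
    = (-1) ^ ell2 J I0 * (-1) ^ card (J - I0) * (-1) ^ card {i\<in>I0. k < i}"
proof -
  have b: "{x\<in>J - (I0 - {k}). k < x} = {x\<in>J - I0. k < x}" by auto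
  have spl: "J - I0 = {x\<in>J - I0. x < k} \<union> {x\<in>J - I0. k < x}" using assms(3) by (auto simp: linorder_not_less order.order_iff_strict)
  have "card (J - I0) = card {x\<in>J - I0. x < k} + card {x\<in>J - I0. k < x}"
    by (subst spl, rule card_Un_disjoint) (use assms(1) in auto)
  moreover have "ell2 J I0 + card {i\<in>I0. k < i} = ell2 J (I0 - {k}) + card {j\<in>J - I0. j < k}"
    by (rule E3[OF assms])
  ultimately have "(ell2 J (I0 - {k}) + card {x\<in>J - I0. k < x}) + 2 * card {x\<in>J - I0. x < k}
     = (ell2 J I0 + card (J - I0) + card {i\<in>I0. k < i}) + 2 * 0" by simp
  then have "(-1::'r) ^ (ell2 J (I0 - {k}) + card {x\<in>J - I0. k < x}) = (-1) ^ (ell2 J I0 + card (J - I0) + card {i\<in>I0. k < i})"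
    by (rule m1_eq)
  then show ?thesis unfolding b by (simp add: power_add)
qed

lemma card_split_less:
  fixes x :: "'a::linorder"
  assumes "finite A" "x \<notin> A"
  shows "card {y\<in>A. y < x} + card {y\<in>A. x < y} = card A"
proof -
  have spl: "A = {y\<in>A. y < x} \<union> {y\<in>A. x < y}"
  proof (intro equalityI subsetI)
    fix y assume y: "y \<in> A"
    then have "y \<noteq> x" using assms(2) by auto
    then have "y < x \<or> x < y" using linorder_less_linear[of y x] by auto
    then show "y \<in> {y\<in>A. y < x} \<union> {y\<in>A. x < y}" using y by auto
  qed auto
  show ?thesis by (subst (3) spl, rule card_Un_disjoint[symmetric]) (use assms(1) in auto)
qed

lemma card_split_sub:
  assumes "finite J" "I \<subseteq> J"
  shows "card {y\<in>J. P y} = card {y\<in>I. P y} + card {y\<in>J - I. P y}"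
proof -
  have spl: "{y\<in>J. P y} = {y\<in>I. P y} \<union> {y\<in>J - I. P y}" using assms(2) by auto
  show ?thesis by (subst spl, rule card_Un_disjoint) (use assms(1) finite_subset[OF assms(2)] in auto)
qed

lemma m1_odd: "odd a \<Longrightarrow> (-1::'a::comm_ring_1) ^ a = -1" by simp
lemma m1_even: "even a \<Longrightarrow> (-1::'a::comm_ring_1) ^ a = 1" by simp

lemma SI1:
  fixes q :: "'r::comm_ring_1"
  assumes J: "finite J" "s \<notin> J" and I0: "I0 \<subseteq> J" "even (card I0) = (\<not> e)"
  shows "(\<Sum>k\<in>{k\<in>I0. s \<le> k}. cf q J (I0 - {k}) * (-1) ^ card {x\<in>J - (I0 - {k}). k < x} * (if k = s then q else 2 * q))
       = (-1) ^ card {j\<in>J. s < j} * cf q (insert s J) (insert s I0) + (-1) ^ (card J + 1) * (if e then q else 1) * cf q J I0"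
proof -
  have fI: "finite I0" using J I0 finite_subset by blast
  have sI0: "s \<notin> I0" using J I0 by auto
  define X where "X = {k\<in>I0. s < k}"
  have fX: "finite X" using fI X_def by simp
  have eX: "{k\<in>I0. s \<le> k} = X" unfolding X_def using sI0 by (auto simp: le_less)
  define \<sigma> where "\<sigma> = (-1::'r) ^ ell2 J I0"
  define \<mu> where "\<mu> = (-1::'r) ^ card (J - I0)"
  define p where "p = card I0"
  define a where "a = card X"
  have trm: "cf q J (I0 - {k}) * (-1) ^ card {x\<in>J - (I0 - {k}). k < x} * (if k = s then q else 2 * q)
      = \<sigma> * \<mu> * (- q) ^ ((p - 1) div 2) * (2 * q) * (-1) ^ card {i\<in>X. k < i}" if k: "k \<in> X" for k
  proof -
    have kI: "k \<in> I0" and sk: "s < k" using k X_def by auto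
    have c1: "card (I0 - {k}) = p - 1" using kI fI p_def by simp
    have c2: "{i\<in>I0. k < i} = {i\<in>X. k < i}" using sk unfolding X_def by auto
    have "cf q J (I0 - {k}) * (-1) ^ card {x\<in>J - (I0 - {k}). k < x}
        = ((-1) ^ ell2 J (I0 - {k}) * (-1) ^ card {x\<in>J - (I0 - {k}). k < x}) * (- q) ^ ((p - 1) div 2)"
      unfolding cf_def c1 by (simp add: ac_simps)
    also have "\<dots> = \<sigma> * \<mu> * (-1) ^ card {i\<in>X. k < i} * (- q) ^ ((p - 1) div 2)"
      unfolding SG[OF J(1) I0(1) kI] \<sigma>_def \<mu>_def c2 ..
    moreover have "k \<noteq> s" using sk by simp
    ultimately show ?thesis by (simp add: ac_simps)
  qed
  have L: "(\<Sum>k\<in>{k\<in>I0. s \<le> k}. cf q J (I0 - {k}) * (-1) ^ card {x\<in>J - (I0 - {k}). k < x} * (if k = s then q else 2 * q))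
     = \<sigma> * \<mu> * (- q) ^ ((p - 1) div 2) * (2 * q) * (if odd a then 1 else 0)"
    unfolding eX using trm
    by (simp add: sum_distrib_left[symmetric] ALT[OF fX] a_def cong: sum.cong)
  have cJ: "card {j\<in>J. s < j} = a + card {j\<in>J - I0. s < j}"
    unfolding a_def X_def by (rule card_split_sub[OF J(1) I0(1)])
  have cM: "card {j\<in>J - I0. j < s} + card {j\<in>J - I0. s < j} = card (J - I0)"
    by (rule card_split_less) (use J in auto)
  have "(-1::'r) ^ card {j\<in>J. s < j} * (-1) ^ ell2 (insert s J) (insert s I0) = (-1) ^ (a + ell2 J I0 + card (J - I0))"
  proof -
    have "(card {j\<in>J. s < j} + ell2 (insert s J) (insert s I0)) + 2 * 0 = (a + ell2 J I0 + card (J - I0)) + 2 * 0"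
      using cJ cM E2[OF J I0(1)] by simp
    then show ?thesis by (subst power_add[symmetric]) (rule m1_eq)
  qed
  then have R1: "(-1) ^ card {j\<in>J. s < j} * cf q (insert s J) (insert s I0) = \<sigma> * \<mu> * (-1) ^ a * (- q) ^ (Suc p div 2)"
  proof -
    assume h: "(-1::'r) ^ card {j\<in>J. s < j} * (-1) ^ ell2 (insert s J) (insert s I0) = (-1) ^ (a + ell2 J I0 + card (J - I0))"
    have "(-1) ^ card {j\<in>J. s < j} * cf q (insert s J) (insert s I0) =
        ((-1) ^ card {j\<in>J. s < j} * (-1) ^ ell2 (insert s J) (insert s I0)) * (- q) ^ (Suc p div 2)"
      unfolding cf_def p_def using fI sI0 by (simp add: ac_simps)
    also have "\<dots> = \<sigma> * \<mu> * (-1) ^ a * (- q) ^ (Suc p div 2)"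
      unfolding h \<sigma>_def \<mu>_def by (simp add: power_add ac_simps)
    finally show ?thesis .
  qed
  have cJ2: "card J = card (J - I0) + p" unfolding p_def using J(1) I0(1)
    by (metis card_Diff_subset finite_subset le_add_diff_inverse2 card_mono)
  have R2: "(-1::'r) ^ (card J + 1) * (if e then q else 1) * cf q J I0 = - (\<mu> * (-1) ^ p * (if e then q else 1) * \<sigma> * (- q) ^ (p div 2))"
    unfolding cf_def \<sigma>_def \<mu>_def cJ2 p_def by (simp add: power_add)
  show ?thesis unfolding L R1 R2
  proof (cases e)
    case True
    then have "odd p" using I0(2) p_def by simp
    then obtain d where d: "p = 2 * d + 1" using oddE by blast
    have pd: "(p - 1) div 2 = d" "Suc p div 2 = Suc d" "p div 2 = d" "(-1::'r) ^ p = -1" using d by auto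
    show "\<sigma> * \<mu> * (- q) ^ ((p - 1) div 2) * (2 * q) * (if odd a then 1 else 0) =
      \<sigma> * \<mu> * (-1) ^ a * (- q) ^ (Suc p div 2) + - (\<mu> * (-1) ^ p * (if e then q else 1) * \<sigma> * (- q) ^ (p div 2))"
    proof (cases "odd a")
      case True
      then show ?thesis unfolding pd power_Suc m1_odd[OF True] using \<open>e\<close> True by (simp add: algebra_simps)
    next
      case False
      then have e1: "(-1::'r) ^ a = 1" by simp
      show ?thesis unfolding pd power_Suc e1 using \<open>e\<close> False by (simp add: algebra_simps)
    qed
  next
    case False
    then have "even p" using I0(2) p_def by simp
    then obtain d where d: "p = 2 * d" using evenE by blast
    show "\<sigma> * \<mu> * (- q) ^ ((p - 1) div 2) * (2 * q) * (if odd a then 1 else 0) =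
      \<sigma> * \<mu> * (-1) ^ a * (- q) ^ (Suc p div 2) + - (\<mu> * (-1) ^ p * (if e then q else 1) * \<sigma> * (- q) ^ (p div 2))"
    proof (cases "odd a")
      case True
      then have "a > 0" by (rule odd_pos)
      then have "X \<noteq> {}" unfolding a_def by auto
      then have "p > 0" unfolding p_def X_def using fI by (auto simp: card_gt_0_iff)
      then obtain d' where d': "d = Suc d'" using d by (cases d) auto
      have pd: "(p - 1) div 2 = d'" "Suc p div 2 = Suc d'" "p div 2 = Suc d'" "(-1::'r) ^ p = 1" using d d' by auto
      show ?thesis unfolding pd power_Suc m1_odd[OF True] using False True by (simp add: algebra_simps)
    next
      case ev: False
      have pd: "Suc p div 2 = d" "p div 2 = d" "(-1::'r) ^ p = 1" using d by auto
      have e1: "(-1::'r) ^ a = 1" using ev by simp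
      show ?thesis unfolding pd e1 using False ev by (simp add: algebra_simps)
    qed
  qed
qed


lemma TRM:
  fixes q :: "'r::comm_ring_1"
  assumes "finite J" "I0 \<subseteq> J" "k \<in> I0" "s < k"
  shows "cf q J (I0 - {k}) * (-1) ^ card {x\<in>J - (I0 - {k}). k < x} * (if k = s then q else 2 * q)
      = (-1) ^ ell2 J I0 * (-1) ^ card (J - I0) * (- q) ^ ((card I0 - 1) div 2) * (2 * q) * (-1) ^ card {i\<in>{k\<in>I0. s < k}. k < i}"
proof -
  have fI: "finite I0" using assms finite_subset by blast
  have c1: "card (I0 - {k}) = card I0 - 1" using assms(3) fI by simp
  have c2: "{i\<in>I0. k < i} = {i\<in>{k\<in>I0. s < k}. k < i}" using assms(4) by auto
  have "cf q J (I0 - {k}) * (-1) ^ card {x\<in>J - (I0 - {k}). k < x}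
      = ((-1) ^ ell2 J (I0 - {k}) * (-1) ^ card {x\<in>J - (I0 - {k}). k < x}) * (- q) ^ ((card I0 - 1) div 2)"
    unfolding cf_def c1 by (simp add: ac_simps)
  also have "\<dots> = (-1) ^ ell2 J I0 * (-1) ^ card (J - I0) * (-1) ^ card {i\<in>{k\<in>I0. s < k}. k < i} * (- q) ^ ((card I0 - 1) div 2)"
    unfolding SG[OF assms(1-3)] c2 ..
  moreover have "k \<noteq> s" using assms(4) by simp
  ultimately show ?thesis by (simp add: ac_simps)
qed

lemma SI2:
  fixes q :: "'r::comm_ring_1"
  assumes J: "finite J" "s \<in> J" and I0: "I0 \<subseteq> J" "even (card I0) = (\<not> e)"
  shows "(if s \<notin> I0 then cf q J (insert s I0) * (-1) ^ card {x\<in>J - insert s I0. s < x} else 0) +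
     (\<Sum>k\<in>{k\<in>I0. s \<le> k}. cf q J (I0 - {k}) * (-1) ^ card {x\<in>J - (I0 - {k}). k < x} * (if k = s then q else 2 * q))
       = (-1) ^ (card J + 1) * (if e then q else 1) * cf q J I0"
proof -
  have fI: "finite I0" using J I0 finite_subset by blast
  define X where "X = {k\<in>I0. s < k}"
  have fX: "finite X" using fI X_def by simp
  define \<sigma> where "\<sigma> = (-1::'r) ^ ell2 J I0"
  define \<mu> where "\<mu> = (-1::'r) ^ card (J - I0)"
  define p where "p = card I0"
  define a where "a = card X"
  have SX: "(\<Sum>k\<in>X. cf q J (I0 - {k}) * (-1) ^ card {x\<in>J - (I0 - {k}). k < x} * (if k = s then q else 2 * q))
     = \<sigma> * \<mu> * (- q) ^ ((p - 1) div 2) * (2 * q) * (if odd a then 1 else 0)"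
  proof -
    have "(\<Sum>k\<in>X. cf q J (I0 - {k}) * (-1) ^ card {x\<in>J - (I0 - {k}). k < x} * (if k = s then q else 2 * q))
      = (\<Sum>k\<in>X. \<sigma> * \<mu> * (- q) ^ ((p - 1) div 2) * (2 * q) * (-1) ^ card {i\<in>X. k < i})"
    proof (rule sum.cong[OF refl])
      fix k assume "k \<in> X"
      then have k: "k \<in> I0" "s < k" by (auto simp: X_def)
      show "cf q J (I0 - {k}) * (-1) ^ card {x\<in>J - (I0 - {k}). k < x} * (if k = s then q else 2 * q)
        = \<sigma> * \<mu> * (- q) ^ ((p - 1) div 2) * (2 * q) * (-1) ^ card {i\<in>X. k < i}"
        using TRM[OF J(1) I0(1) k, of q] unfolding X_def[symmetric] \<sigma>_def \<mu>_def p_def .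
    qed
    also have "\<dots> = \<sigma> * \<mu> * (- q) ^ ((p - 1) div 2) * (2 * q) * (if odd a then 1 else 0)"
      by (simp add: sum_distrib_left[symmetric] ALT[OF fX] a_def)
    finally show ?thesis .
  qed
  have cJ2: "card J = card (J - I0) + p" unfolding p_def using J(1) I0(1)
    by (metis card_Diff_subset finite_subset le_add_diff_inverse2 card_mono)
  have R: "(-1::'r) ^ (card J + 1) * (if e then q else 1) * cf q J I0 = \<mu> * (-1) ^ (p + 1) * (if e then q else 1) * \<sigma> * (- q) ^ (p div 2)"
    unfolding cf_def \<sigma>_def \<mu>_def cJ2 p_def by (simp add: power_add ac_simps)
  show ?thesis
  proof (cases "s \<in> I0")
    case True
    note sI0 = True
    have eX: "{k\<in>I0. s \<le> k} = insert s X" unfolding X_def using True by (auto simp: le_less)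
    have sX: "s \<notin> X" unfolding X_def by simp
    have ts: "cf q J (I0 - {s}) * (-1) ^ card {x\<in>J - (I0 - {s}). s < x} * (if s = s then q else 2 * q)
       = \<sigma> * \<mu> * (-1) ^ a * (- q) ^ ((p - 1) div 2) * q"
    proof -
      have c1: "card (I0 - {s}) = p - 1" using True fI p_def by simp
      have "cf q J (I0 - {s}) * (-1) ^ card {x\<in>J - (I0 - {s}). s < x}
          = ((-1) ^ ell2 J (I0 - {s}) * (-1) ^ card {x\<in>J - (I0 - {s}). s < x}) * (- q) ^ ((p - 1) div 2)"
        unfolding cf_def c1 by (simp add: ac_simps)
      also have "\<dots> = \<sigma> * \<mu> * (-1) ^ a * (- q) ^ ((p - 1) div 2)"
        unfolding SG[OF J(1) I0(1) True] \<sigma>_def \<mu>_def a_def X_def ..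
      finally show ?thesis by simp
    qed
    have L: "(\<Sum>k\<in>{k\<in>I0. s \<le> k}. cf q J (I0 - {k}) * (-1) ^ card {x\<in>J - (I0 - {k}). k < x} * (if k = s then q else 2 * q))
      = \<sigma> * \<mu> * (-1) ^ a * (- q) ^ ((p - 1) div 2) * q + \<sigma> * \<mu> * (- q) ^ ((p - 1) div 2) * (2 * q) * (if odd a then 1 else 0)"
      unfolding eX sum.insert[OF fX sX] ts SX ..
    have p0: "p > 0" using True fI p_def by (auto simp: card_gt_0_iff)
    show ?thesis
    proof (cases e)
      case True
      then have "odd p" using I0(2) p_def by simp
      then obtain d where d: "p = 2 * d + 1" using oddE by blast
      have pd: "(p - 1) div 2 = d" "p div 2 = d" "(-1::'r) ^ (p + 1) = 1" using d by auto
      show ?thesis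
      proof (cases "odd a")
        case True
        then show ?thesis unfolding L R pd m1_odd[OF True] using sI0 \<open>e\<close> True by (simp add: algebra_simps)
      next
        case False
        then have e1: "(-1::'r) ^ a = 1" by simp
        show ?thesis unfolding L R pd e1 using sI0 \<open>e\<close> False by (simp add: algebra_simps)
      qed
    next
      case False
      then have "even p" using I0(2) p_def by simp
      then obtain d where d: "p = 2 * d" using evenE by blast
      then obtain d' where d': "d = Suc d'" using p0 by (cases d) auto
      have pd: "(p - 1) div 2 = d'" "p div 2 = Suc d'" "(-1::'r) ^ (p + 1) = -1" using d d' by auto
      show ?thesis
      proof (cases "odd a")
        case True
        then show ?thesis unfolding L R pd power_Suc m1_odd[OF True] using sI0 False True by (simp add: algebra_simps)
      next
        case ev: False
        then have e1: "(-1::'r) ^ a = 1" by simp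
        show ?thesis unfolding L R pd power_Suc e1 using sI0 False ev by (simp add: algebra_simps)
      qed
    qed
  next
    case False
    have eX: "{k\<in>I0. s \<le> k} = X" unfolding X_def using False by (auto simp: le_less)
    have fJ: "finite (J - insert s I0)" using J by simp
    have sn: "s \<notin> J - insert s I0" by simp
    have i1: "insert s I0 \<subseteq> J" using J I0 by simp
    have E3': "ell2 J (insert s I0) + card {i\<in>insert s I0. s < i} = ell2 J (insert s I0 - {s}) + card {j\<in>J - insert s I0. j < s}"
      by (rule E3[OF J(1) i1]) simp
    have r1: "insert s I0 - {s} = I0" using False by simp
    have r2: "{i\<in>insert s I0. s < i} = X" unfolding X_def by auto
    have cc: "card {j\<in>J - insert s I0. j < s} + card {x\<in>J - insert s I0. s < x} + 1 = card (J - I0)"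
    proof -
      have e: "J - I0 = insert s (J - insert s I0)" using J False by auto
      have "card (insert s (J - insert s I0)) = Suc (card (J - insert s I0))"
        using fJ sn by (rule card_insert_disjoint)
      then have "card (J - I0) = Suc (card (J - insert s I0))" unfolding e[symmetric] .
      then show ?thesis using card_split_less[OF fJ sn] by simp
    qed
    have "(ell2 J (insert s I0) + card {x\<in>J - insert s I0. s < x}) + 2 * (a + card {j\<in>J - insert s I0. j < s} + 1)
       = (ell2 J I0 + card (J - I0) + (a + 1)) + 2 * card {j\<in>J - insert s I0. j < s}"
      using E3' cc unfolding r1 r2 a_def by simp
    then have sg: "(-1::'r) ^ (ell2 J (insert s I0) + card {x\<in>J - insert s I0. s < x}) = (-1) ^ (ell2 J I0 + card (J - I0) + (a + 1))"
      by (rule m1_eq)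
    have W: "cf q J (insert s I0) * (-1) ^ card {x\<in>J - insert s I0. s < x} = - (\<sigma> * \<mu> * (-1) ^ a * (- q) ^ (Suc p div 2))"
    proof -
      have "cf q J (insert s I0) * (-1) ^ card {x\<in>J - insert s I0. s < x}
        = (-1::'r) ^ (ell2 J (insert s I0) + card {x\<in>J - insert s I0. s < x}) * (- q) ^ (Suc p div 2)"
        unfolding cf_def p_def using fI False by (simp add: power_add ac_simps)
      also have "\<dots> = - (\<sigma> * \<mu> * (-1) ^ a * (- q) ^ (Suc p div 2))"
        unfolding sg \<sigma>_def \<mu>_def by (simp add: power_add)
      finally show ?thesis .
    qed
    have L: "(if s \<notin> I0 then cf q J (insert s I0) * (-1) ^ card {x\<in>J - insert s I0. s < x} else 0) +
     (\<Sum>k\<in>{k\<in>I0. s \<le> k}. cf q J (I0 - {k}) * (-1) ^ card {x\<in>J - (I0 - {k}). k < x} * (if k = s then q else 2 * q))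
     = - (\<sigma> * \<mu> * (-1) ^ a * (- q) ^ (Suc p div 2)) + \<sigma> * \<mu> * (- q) ^ ((p - 1) div 2) * (2 * q) * (if odd a then 1 else 0)"
      unfolding eX SX W using False by simp
    show ?thesis
    proof (cases e)
      case True
      then have "odd p" using I0(2) p_def by simp
      then obtain d where d: "p = 2 * d + 1" using oddE by blast
      have pd: "(p - 1) div 2 = d" "Suc p div 2 = Suc d" "p div 2 = d" "(-1::'r) ^ (p + 1) = 1" using d by auto
      show ?thesis
      proof (cases "odd a")
        case True
        then show ?thesis unfolding L R pd power_Suc m1_odd[OF True] using \<open>e\<close> True by (simp add: algebra_simps)
      next
        case False
        then have e1: "(-1::'r) ^ a = 1" by simp
        show ?thesis unfolding L R pd power_Suc e1 using \<open>e\<close> False by (simp add: algebra_simps)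
      qed
    next
      case False
      then have "even p" using I0(2) p_def by simp
      then obtain d where d: "p = 2 * d" using evenE by blast
      show ?thesis
      proof (cases "odd a")
        case True
        then have "a > 0" by (rule odd_pos)
        then have "X \<noteq> {}" unfolding a_def by auto
        then have "p > 0" unfolding p_def X_def using fI by (auto simp: card_gt_0_iff)
        then obtain d' where d': "d = Suc d'" using d by (cases d) auto
        have pd: "(p - 1) div 2 = d'" "Suc p div 2 = Suc d'" "p div 2 = Suc d'" "(-1::'r) ^ (p + 1) = -1" using d d' by auto
        show ?thesis unfolding L R pd power_Suc m1_odd[OF True] using False True by (simp add: algebra_simps)
      next
        case ev: False
        have pd: "Suc p div 2 = d" "p div 2 = d" "(-1::'r) ^ (p + 1) = -1" using d by auto
        have e1: "(-1::'r) ^ a = 1" using ev by simp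
        show ?thesis unfolding L R pd e1 using False ev by (simp add: algebra_simps)
      qed
    qed
  qed
qed


definition Fam :: "'s set \<Rightarrow> bool \<Rightarrow> 's set set" where
  "Fam J e = {I. I \<subseteq> J \<and> even (card I) = e}"

definition tau :: "'r::comm_ring_1 \<Rightarrow> bool \<Rightarrow> 's::linorder set \<Rightarrow> ('s, 'r) ncpoly" where
  "tau q e J = (\<Sum>I\<in>Fam J e. scal (cf q J I) (tJ (J - I)))"

lemma finite_Fam[simp]: "finite J \<Longrightarrow> finite (Fam J e)"
  unfolding Fam_def by (rule finite_subset[of _ "Pow J"]) auto

lemma tau_plus_eq: "finite J \<Longrightarrow> tau_plus q J = tau q True J"
  unfolding tau_plus_def tau_def Fam_def cf_def
  by (rule sum.cong) (auto simp: ellJ_ell2)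

lemma odd_div: "odd (n::nat) \<Longrightarrow> (n - 1) div 2 = n div 2"
  by (auto elim: oddE)

lemma odd_div': "odd (n::nat) \<Longrightarrow> (n - Suc 0) div 2 = n div 2"
  by (auto elim: oddE)

lemma tau_minus_eq: "finite J \<Longrightarrow> tau_minus q J = tau q False J"
  unfolding tau_minus_def tau_def Fam_def cf_def
  by (rule sum.cong) (auto simp: ellJ_ell2 odd_div')

lemma reidx:
  assumes J: "finite J"
  shows "(\<Sum>I\<in>Fam J e. \<Sum>k\<in>{k\<in>J - I. R k}. G I k) = (\<Sum>I0\<in>Fam J (\<not> e). \<Sum>k\<in>{k\<in>I0. R k}. G (I0 - {k}) k)"
proof -
  let ?S = "Sigma (Fam J (\<not> e)) (\<lambda>I0. {k\<in>I0. R k})"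
  let ?T = "Sigma (Fam J e) (\<lambda>I. {k\<in>J - I. R k})"
  let ?h = "\<lambda>(I0, k). (I0 - {k}, k)"
  have fin1: "\<forall>I\<in>Fam J e. finite {k\<in>J - I. R k}" using J by simp
  have fin2: "\<forall>I0\<in>Fam J (\<not> e). finite {k\<in>I0. R k}" using J by (auto simp: Fam_def intro: finite_subset)
  have bij: "bij_betw ?h ?S ?T"
  proof (rule bij_betw_byWitness[where f' = "\<lambda>(I, k). (insert k I, k)"])
    show "\<forall>a\<in>?S. (\<lambda>(I, k). (insert k I, k)) (?h a) = a" by auto
    show "\<forall>a\<in>?T. ?h ((\<lambda>(I, k). (insert k I, k)) a) = a" by auto
    show "?h ` ?S \<subseteq> ?T"
    proof
      fix x assume "x \<in> ?h ` ?S"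
      then obtain I0 k where x: "x = (I0 - {k}, k)" "I0 \<subseteq> J" "even (card I0) = (\<not> e)" "k \<in> I0" "R k"
        by (auto simp: Fam_def)
      have fI: "finite I0" using x(2) J finite_subset by blast
      have "card I0 = Suc (card (I0 - {k}))" using card_Suc_Diff1[OF fI x(4)] by simp
      then have "even (card (I0 - {k})) = e" using x(3) by simp
      then show "x \<in> ?T" using x by (auto simp: Fam_def)
    qed
    show "(\<lambda>(I, k). (insert k I, k)) ` ?T \<subseteq> ?S"
    proof
      fix x assume "x \<in> (\<lambda>(I, k). (insert k I, k)) ` ?T"
      then obtain I k where x: "x = (insert k I, k)" "I \<subseteq> J" "even (card I) = e" "k \<in> J" "k \<notin> I" "R k"
        by (auto simp: Fam_def)
      have fI: "finite I" using x(2) J finite_subset by blast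
      have "card (insert k I) = Suc (card I)" using fI x(5) by simp
      then have "even (card (insert k I)) = (\<not> e)" using x(3) by simp
      then show "x \<in> ?S" using x by (auto simp: Fam_def)
    qed
  qed
  have "(\<Sum>I\<in>Fam J e. \<Sum>k\<in>{k\<in>J - I. R k}. G I k) = (\<Sum>(I, k)\<in>?T. G I k)"
    by (rule sum.Sigma) (use J fin1 in auto)
  also have "\<dots> = (\<Sum>x\<in>?S. (\<lambda>(I, k). G I k) (?h x))"
    by (rule sum.reindex_bij_betw[OF bij, symmetric])
  also have "\<dots> = (\<Sum>(I0, k)\<in>?S. G (I0 - {k}) k)"
    by (rule sum.cong) auto
  also have "\<dots> = (\<Sum>I0\<in>Fam J (\<not> e). \<Sum>k\<in>{k\<in>I0. R k}. G (I0 - {k}) k)"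
    by (rule sum.Sigma[symmetric]) (use J fin2 in auto)
  finally show ?thesis .
qed

lemma tau_gen: "tau q e J \<cdot> gen s = (\<Sum>I\<in>Fam J e. Poly_Mapping.single (sorted_list_of_set (J - I) @ [s]) (cf q J I))"
  unfolding tau_def ncmult_sum_left scal_tJ gen_def ncmult_single by simp

lemma NFL_tau:
  assumes S: "finite S" "s \<in> S" "J \<subseteq> S"
  shows "NFL S q (tau q e J \<cdot> gen s) = (\<Sum>I\<in>Fam J e. scal (cf q J I) (Wd s (J - I) {} + Ct q s (J - I) {}))"
proof -
  have fJ: "finite J" using S finite_subset by blast
  show ?thesis unfolding tau_gen NFL_sum NFL_single
  proof (rule sum.cong[OF refl])
    fix I assume "I \<in> Fam J e"
    let ?A = "sorted_list_of_set (J - I)"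
    have sA: "set ?A = J - I" using fJ by simp
    have "nf S q (?A @ s # []) = Wd s (set ?A) (set []) + Ct q s (set ?A) (set [])"
      by (rule bub[OF S(1,2)]) (use sA S(3) in auto)
    then show "scal (cf q J I) (nf S q (?A @ [s])) = scal (cf q J I) (Wd s (J - I) {} + Ct q s (J - I) {})"
      unfolding sA by simp
  qed
qed

lemma keys_tau_gen:
  assumes S: "finite S" "s \<in> S" "J \<subseteq> S"
  shows "\<forall>w\<in>Poly_Mapping.keys (tau q e J \<cdot> gen s). set w \<subseteq> S"
proof
  fix w assume "w \<in> Poly_Mapping.keys (tau q e J \<cdot> gen s)"
  then have "w \<in> (\<Union>I\<in>Fam J e. Poly_Mapping.keys (Poly_Mapping.single (sorted_list_of_set (J - I) @ [s]) (cf q J I)))"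
    unfolding tau_gen using keys_sum by fastforce
  then obtain I where "I \<in> Fam J e" "w = sorted_list_of_set (J - I) @ [s]"
    by (auto split: if_splits)
  moreover have "finite J" using S finite_subset by blast
  ultimately show "set w \<subseteq> S" using S by auto
qed


definition ctc :: "'r::comm_ring_1 \<Rightarrow> 's::linorder \<Rightarrow> 's set \<Rightarrow> 's set \<Rightarrow> 's \<Rightarrow> 'r" where
  "ctc q s J I0 k = cf q J (I0 - {k}) * (-1) ^ card {x\<in>J - (I0 - {k}). k < x} * (if k = s then q else 2 * q)"

lemma Cpart:
  assumes J: "finite J"
  shows "(\<Sum>I\<in>Fam J e. scal (cf q J I) (Ct q s (J - I) {})) =
    (\<Sum>I0\<in>Fam J (\<not> e). scal (\<Sum>k\<in>{k\<in>I0. s \<le> k}. ctc q s J I0 k) (tJ (J - I0)))"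
proof -
  have "(\<Sum>I\<in>Fam J e. scal (cf q J I) (Ct q s (J - I) {})) =
      (\<Sum>I\<in>Fam J e. \<Sum>k\<in>{k\<in>J - I. s \<le> k}. scal (cf q J I * ((-1) ^ card {x\<in>J - I. k < x} * (if k = s then q else 2 * q))) (tJ (J - I - {k})))"
    unfolding Ct_def by (simp add: scal_sum_right scal_scal)
  also have "\<dots> = (\<Sum>I0\<in>Fam J (\<not> e). \<Sum>k\<in>{k\<in>I0. s \<le> k}. scal (cf q J (I0 - {k}) * ((-1) ^ card {x\<in>J - (I0 - {k}). k < x} * (if k = s then q else 2 * q))) (tJ (J - (I0 - {k}) - {k})))"
    by (rule reidx[OF J])
  also have "\<dots> = (\<Sum>I0\<in>Fam J (\<not> e). \<Sum>k\<in>{k\<in>I0. s \<le> k}. scal (ctc q s J I0 k) (tJ (J - I0)))"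
  proof (intro sum.cong refl)
    fix I0 k assume "k \<in> {k\<in>I0. s \<le> k}"
    then have "J - (I0 - {k}) - {k} = J - I0" by auto
    then show "scal (cf q J (I0 - {k}) * ((-1) ^ card {x\<in>J - (I0 - {k}). k < x} * (if k = s then q else 2 * q))) (tJ (J - (I0 - {k}) - {k}))
      = scal (ctc q s J I0 k) (tJ (J - I0))" unfolding ctc_def by (simp add: mult.assoc)
  qed
  also have "\<dots> = (\<Sum>I0\<in>Fam J (\<not> e). scal (\<Sum>k\<in>{k\<in>I0. s \<le> k}. ctc q s J I0 k) (tJ (J - I0)))"
    by (simp add: scal_sum_left)
  finally show ?thesis .
qed

lemma Fam_insert:
  assumes J: "finite J" "s \<notin> J"
  shows "Fam (insert s J) e = Fam J e \<union> insert s ` Fam J (\<not> e)"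
proof (intro equalityI subsetI)
  fix I assume I: "I \<in> Fam (insert s J) e"
  show "I \<in> Fam J e \<union> insert s ` Fam J (\<not> e)"
  proof (cases "s \<in> I")
    case True
    have fI: "finite I" using I J unfolding Fam_def by (auto intro: finite_subset)
    have "card I = Suc (card (I - {s}))" using card_Suc_Diff1[OF fI True] by simp
    then have "I - {s} \<in> Fam J (\<not> e)" using I unfolding Fam_def by auto
    moreover have "I = insert s (I - {s})" using True by auto
    ultimately have "I \<in> insert s ` Fam J (\<not> e)" by (rule rev_image_eqI)
    then show ?thesis by (rule UnI2)
  next
    case False
    then show ?thesis using I unfolding Fam_def by auto
  qed
next
  fix I assume I: "I \<in> Fam J e \<union> insert s ` Fam J (\<not> e)"
  show "I \<in> Fam (insert s J) e"
  proof (cases "I \<in> Fam J e")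
    case True then show ?thesis unfolding Fam_def by auto
  next
    case False
    then obtain I0 where I0: "I0 \<in> Fam J (\<not> e)" "I = insert s I0" using I by auto
    have fI: "finite I0" using I0 J unfolding Fam_def by (auto intro: finite_subset)
    have "s \<notin> I0" using I0 J unfolding Fam_def by auto
    then have "card I = Suc (card I0)" using fI I0 by simp
    then show ?thesis using I0 unfolding Fam_def by auto
  qed
qed

lemma case_notin:
  fixes q :: "'r::comm_ring_1"
  assumes J: "finite J" "s \<notin> J"
  shows "(\<Sum>I\<in>Fam J e. scal (cf q J I) (Wd s (J - I) {} + Ct q s (J - I) {})) =
    scal ((-1) ^ card {j\<in>J. s < j}) (tau q e (J \<union> {s})) + scal ((-1) ^ (card J + 1) * (if e then q else 1)) (tau q (\<not> e) J)"
proof -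
  define \<epsilon> where "\<epsilon> = (-1::'r) ^ card {j\<in>J. s < j}"
  define lam where "lam = (-1::'r) ^ (card J + 1) * (if e then q else 1)"
  let ?A = "\<Sum>I\<in>Fam J e. scal (cf q (insert s J) I) (tJ (insert s J - I))"
  let ?B = "\<Sum>I0\<in>Fam J (\<not> e). scal (cf q (insert s J) (insert s I0)) (tJ (J - I0))"
  have disj: "Fam J e \<inter> insert s ` Fam J (\<not> e) = {}" using J unfolding Fam_def by auto
  have inj: "inj_on (insert s) (Fam J (\<not> e))"
  proof (rule inj_onI)
    fix A B assume A: "A \<in> Fam J (\<not> e)" and B: "B \<in> Fam J (\<not> e)" and eq: "insert s A = insert s B"
    have "s \<notin> A" "s \<notin> B" using A B J unfolding Fam_def by auto
    then have "A = insert s A - {s}" "B = insert s B - {s}" by auto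
    then show "A = B" using eq by simp
  qed
  have tau_ins: "tau q e (J \<union> {s}) = ?A + ?B"
  proof -
    have "tau q e (J \<union> {s}) = (\<Sum>I\<in>Fam J e \<union> insert s ` Fam J (\<not> e). scal (cf q (insert s J) I) (tJ (insert s J - I)))"
      unfolding tau_def using Fam_insert[OF J] by simp
    also have "\<dots> = ?A + (\<Sum>I\<in>insert s ` Fam J (\<not> e). scal (cf q (insert s J) I) (tJ (insert s J - I)))"
      by (rule sum.union_disjoint) (use J disj in auto)
    also have "(\<Sum>I\<in>insert s ` Fam J (\<not> e). scal (cf q (insert s J) I) (tJ (insert s J - I))) =
        (\<Sum>I0\<in>Fam J (\<not> e). scal (cf q (insert s J) (insert s I0)) (tJ (insert s J - insert s I0)))"
      by (rule sum.reindex[OF inj, unfolded comp_def])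
    also have "\<dots> = ?B"
    proof (rule sum.cong[OF refl])
      fix I0 assume "I0 \<in> Fam J (\<not> e)"
      then have "insert s J - insert s I0 = J - I0" using J unfolding Fam_def by auto
      then show "scal (cf q (insert s J) (insert s I0)) (tJ (insert s J - insert s I0)) = scal (cf q (insert s J) (insert s I0)) (tJ (J - I0))" by simp
    qed
    finally show ?thesis .
  qed
  have Wpart: "(\<Sum>I\<in>Fam J e. scal (cf q J I) (Wd s (J - I) {})) = scal \<epsilon> ?A"
    unfolding scal_sum_right
  proof (rule sum.cong[OF refl])
    fix I assume I: "I \<in> Fam J e"
    then have IJ: "I \<subseteq> J" unfolding Fam_def by simp
    have sI: "s \<notin> I" using IJ J by auto
    have ins: "insert s J - I = insert s (J - I)" using sI by auto
    have fI: "finite I" using IJ J finite_subset by blast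
    have cs: "card {j\<in>J. s < j} = card {i\<in>I. s < i} + card {j\<in>J - I. s < j}"
      by (rule card_split_sub[OF J(1) IJ])
    have "(ell2 J I + card {j\<in>J - I. s < j}) + 2 * card {i\<in>I. s < i} = (card {j\<in>J. s < j} + ell2 (insert s J) I) + 2 * 0"
      using cs E1[OF J IJ] by simp
    then have sg: "(-1::'r) ^ (ell2 J I + card {j\<in>J - I. s < j}) = (-1) ^ (card {j\<in>J. s < j} + ell2 (insert s J) I)"
      by (rule m1_eq)
    have "cf q J I * (-1) ^ card {x\<in>J - I. s < x} = \<epsilon> * cf q (insert s J) I"
    proof -
      have "cf q J I * (-1) ^ card {x\<in>J - I. s < x} = (-1::'r) ^ (ell2 J I + card {j\<in>J - I. s < j}) * (- q) ^ (card I div 2)"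
        unfolding cf_def by (simp add: power_add ac_simps)
      also have "\<dots> = \<epsilon> * cf q (insert s J) I"
        unfolding sg \<epsilon>_def cf_def by (simp add: power_add ac_simps)
      finally show ?thesis .
    qed
    then show "scal (cf q J I) (Wd s (J - I) {}) = scal \<epsilon> (scal (cf q (insert s J) I) (tJ (insert s J - I)))"
      unfolding Wd_def ins using J(2) by (simp add: scal_scal)
  qed
  have Cs: "(\<Sum>I0\<in>Fam J (\<not> e). scal (\<Sum>k\<in>{k\<in>I0. s \<le> k}. ctc q s J I0 k) (tJ (J - I0)))
     = scal \<epsilon> ?B + scal lam (tau q (\<not> e) J)"
  proof -
    have "(\<Sum>I0\<in>Fam J (\<not> e). scal (\<Sum>k\<in>{k\<in>I0. s \<le> k}. ctc q s J I0 k) (tJ (J - I0)))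
      = (\<Sum>I0\<in>Fam J (\<not> e). scal (\<epsilon> * cf q (insert s J) (insert s I0)) (tJ (J - I0)) + scal (lam * cf q J I0) (tJ (J - I0)))"
    proof (rule sum.cong[OF refl])
      fix I0 assume "I0 \<in> Fam J (\<not> e)"
      then have I0: "I0 \<subseteq> J" "even (card I0) = (\<not> e)" unfolding Fam_def by auto
      show "scal (\<Sum>k\<in>{k\<in>I0. s \<le> k}. ctc q s J I0 k) (tJ (J - I0)) =
        scal (\<epsilon> * cf q (insert s J) (insert s I0)) (tJ (J - I0)) + scal (lam * cf q J I0) (tJ (J - I0))"
        unfolding ctc_def SI1[OF J I0] \<epsilon>_def lam_def scal_add_left ..
    qed
    also have "\<dots> = scal \<epsilon> ?B + scal lam (tau q (\<not> e) J)"
      unfolding tau_def by (simp add: sum.distrib scal_sum_right scal_scal)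
    finally show ?thesis .
  qed
  have "(\<Sum>I\<in>Fam J e. scal (cf q J I) (Wd s (J - I) {} + Ct q s (J - I) {})) =
     (\<Sum>I\<in>Fam J e. scal (cf q J I) (Wd s (J - I) {})) + (\<Sum>I\<in>Fam J e. scal (cf q J I) (Ct q s (J - I) {}))"
    by (simp add: scal_add_right sum.distrib)
  also have "\<dots> = scal \<epsilon> ?A + (scal \<epsilon> ?B + scal lam (tau q (\<not> e) J))"
    unfolding Wpart Cpart[OF J(1)] Cs ..
  also have "\<dots> = scal \<epsilon> (tau q e (J \<union> {s})) + scal lam (tau q (\<not> e) J)"
    unfolding tau_ins scal_add_right by (simp add: add.assoc)
  finally show ?thesis unfolding \<epsilon>_def lam_def .
qed



lemma Wpart_in:
  fixes q :: "'r::comm_ring_1"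
  assumes J: "finite J" "s \<in> J"
  shows "(\<Sum>I\<in>Fam J e. scal (cf q J I) (Wd s (J - I) {})) =
    (\<Sum>I0\<in>Fam J (\<not> e). scal (if s \<notin> I0 then cf q J (insert s I0) * (-1) ^ card {x\<in>J - insert s I0. s < x} else 0) (tJ (J - I0)))"
proof -
  define H where "H = (\<lambda>I. scal (cf q J I * (-1) ^ card {x\<in>J - I. s < x}) (tJ (insert s (J - I))))"
  have r: "(\<Sum>I'\<in>Fam J (\<not> e). \<Sum>k\<in>{k\<in>J - I'. k = s}. H (insert k I')) =
      (\<Sum>I\<in>Fam J (\<not> \<not> e). \<Sum>k\<in>{k\<in>I. k = s}. H (insert k (I - {k})))"
    by (rule reidx[OF J(1)])
  have left: "(\<Sum>I\<in>Fam J (\<not> \<not> e). \<Sum>k\<in>{k\<in>I. k = s}. H (insert k (I - {k}))) = (\<Sum>I\<in>Fam J e. scal (cf q J I) (Wd s (J - I) {}))"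
  proof -
    have "(\<Sum>I\<in>Fam J (\<not> \<not> e). \<Sum>k\<in>{k\<in>I. k = s}. H (insert k (I - {k}))) = (\<Sum>I\<in>Fam J e. \<Sum>k\<in>{k\<in>I. k = s}. H (insert k (I - {k})))"
      by simp
    also have "\<dots> = (\<Sum>I\<in>Fam J e. scal (cf q J I) (Wd s (J - I) {}))"
    proof (rule sum.cong[OF refl])
      fix I assume "I \<in> Fam J e"
      show "(\<Sum>k\<in>{k\<in>I. k = s}. H (insert k (I - {k}))) = scal (cf q J I) (Wd s (J - I) {})"
      proof (cases "s \<in> I")
        case True
        then have e1: "{k\<in>I. k = s} = {s}" by auto
        have e2: "insert s (I - {s}) = I" using True by auto
        have "(\<Sum>k\<in>{k\<in>I. k = s}. H (insert k (I - {k}))) = H (insert s (I - {s}))" unfolding e1 by simp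
        also have "\<dots> = H I" unfolding e2 ..
        also have "\<dots> = scal (cf q J I) (Wd s (J - I) {})" using True by (simp add: H_def Wd_def scal_scal)
        finally show ?thesis .
      next
        case False
        then have e1: "{k\<in>I. k = s} = {}" by auto
        show ?thesis unfolding e1 using False J by (simp add: Wd_def)
      qed
    qed
    finally show ?thesis .
  qed
  have right: "(\<Sum>I'\<in>Fam J (\<not> e). \<Sum>k\<in>{k\<in>J - I'. k = s}. H (insert k I')) =
    (\<Sum>I0\<in>Fam J (\<not> e). scal (if s \<notin> I0 then cf q J (insert s I0) * (-1) ^ card {x\<in>J - insert s I0. s < x} else 0) (tJ (J - I0)))"
  proof (rule sum.cong[OF refl])
    fix I0 assume "I0 \<in> Fam J (\<not> e)"
    show "(\<Sum>k\<in>{k\<in>J - I0. k = s}. H (insert k I0)) =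
      scal (if s \<notin> I0 then cf q J (insert s I0) * (-1) ^ card {x\<in>J - insert s I0. s < x} else 0) (tJ (J - I0))"
    proof (cases "s \<in> I0")
      case False
      then have e1: "{k\<in>J - I0. k = s} = {s}" using J by auto
      have e2: "insert s (J - insert s I0) = J - I0" using J False by auto
      show ?thesis unfolding e1 using False by (simp add: e2 H_def)
    next
      case True
      then have e1: "{k\<in>J - I0. k = s} = {}" by auto
      show ?thesis unfolding e1 using True by simp
    qed
  qed
  show ?thesis using r left right by simp
qed

lemma case_in:
  fixes q :: "'r::comm_ring_1"
  assumes J: "finite J" "s \<in> J"
  shows "(\<Sum>I\<in>Fam J e. scal (cf q J I) (Wd s (J - I) {} + Ct q s (J - I) {})) =
    scal ((-1) ^ (card J + 1) * (if e then q else 1)) (tau q (\<not> e) J)"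
proof -
  have "(\<Sum>I\<in>Fam J e. scal (cf q J I) (Wd s (J - I) {} + Ct q s (J - I) {})) =
     (\<Sum>I\<in>Fam J e. scal (cf q J I) (Wd s (J - I) {})) + (\<Sum>I\<in>Fam J e. scal (cf q J I) (Ct q s (J - I) {}))"
    by (simp add: scal_add_right sum.distrib)
  also have "\<dots> = (\<Sum>I0\<in>Fam J (\<not> e). scal ((if s \<notin> I0 then cf q J (insert s I0) * (-1) ^ card {x\<in>J - insert s I0. s < x} else 0)
        + (\<Sum>k\<in>{k\<in>I0. s \<le> k}. ctc q s J I0 k)) (tJ (J - I0)))"
    unfolding Wpart_in[OF J] Cpart[OF J(1)] by (simp add: sum.distrib scal_add_left)
  also have "\<dots> = (\<Sum>I0\<in>Fam J (\<not> e). scal ((-1) ^ (card J + 1) * (if e then q else 1) * cf q J I0) (tJ (J - I0)))"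
  proof (rule sum.cong[OF refl])
    fix I0 assume "I0 \<in> Fam J (\<not> e)"
    then have I0: "I0 \<subseteq> J" "even (card I0) = (\<not> e)" unfolding Fam_def by auto
    show "scal ((if s \<notin> I0 then cf q J (insert s I0) * (-1) ^ card {x\<in>J - insert s I0. s < x} else 0)
        + (\<Sum>k\<in>{k\<in>I0. s \<le> k}. ctc q s J I0 k)) (tJ (J - I0)) =
      scal ((-1) ^ (card J + 1) * (if e then q else 1) * cf q J I0) (tJ (J - I0))"
      unfolding ctc_def SI2[OF J I0] ..
  qed
  also have "\<dots> = scal ((-1) ^ (card J + 1) * (if e then q else 1)) (tau q (\<not> e) J)"
    unfolding tau_def by (simp add: scal_sum_right scal_scal)
  finally show ?thesis .
qed

lemma triv_ring: "(1::'r::comm_ring_1) = 0 \<Longrightarrow> (p :: ('s, 'r) ncpoly) = 0"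
proof (rule poly_mapping_eqI)
  fix w assume "(1::'r) = 0"
  then have "Poly_Mapping.lookup p w = Poly_Mapping.lookup p w * 1" by simp
  also have "\<dots> = 0" using \<open>(1::'r) = 0\<close> by simp
  finally show "Poly_Mapping.lookup p w = Poly_Mapping.lookup 0 w" by simp
qed

lemma main_red:
  fixes q :: "'r::comm_ring_1"
  assumes S: "finite S" "J \<subseteq> S" "s \<in> S"
  shows "reduces (Gq_empty S q) (tau q e J \<cdot> gen s) (\<Sum>I\<in>Fam J e. scal (cf q J I) (Wd s (J - I) {} + Ct q s (J - I) {}))"
proof (cases "(1::'r) = 0")
  case True
  have "tau q e J \<cdot> gen s = (\<Sum>I\<in>Fam J e. scal (cf q J I) (Wd s (J - I) {} + Ct q s (J - I) {}))"
    using triv_ring[OF True, of "tau q e J \<cdot> gen s"] triv_ring[OF True, of "\<Sum>I\<in>Fam J e. scal (cf q J I) (Wd s (J - I) {} + Ct q s (J - I) {})"]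
    by simp
  then show ?thesis unfolding reduces_def by simp
next
  case False
  have "reduces (Gq_empty S q) (tau q e J \<cdot> gen s) (NFL S q (tau q e J \<cdot> gen s))"
    by (rule reduce_nf[OF S(1) False keys_tau_gen[OF S(1) S(3) S(2)]])
  then show ?thesis unfolding NFL_tau[OF S(1) S(3) S(2)] .
qed

theorem lemma3p7:
  fixes S :: "'s::linorder set" and q :: "'r::comm_ring_1" and J :: "'s set" and s :: 's
  assumes "finite S" and "J \<subseteq> S" and "s \<in> S"
  shows "(s \<in> J \<longrightarrow>
            reduces (Gq_empty S q) (tau_plus q J \<cdot> gen s)
              (scal ((-1) ^ (card J + 1) * q) (tau_minus q J)) \<and>
            reduces (Gq_empty S q) (tau_minus q J \<cdot> gen s)
              (scal ((-1) ^ (card J + 1)) (tau_plus q J)))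
       \<and> (s \<notin> J \<longrightarrow>
            reduces (Gq_empty S q) (tau_plus q J \<cdot> gen s)
              (scal ((-1) ^ card {j\<in>J. s < j}) (tau_plus q (J \<union> {s}))
               + scal ((-1) ^ (card J + 1) * q) (tau_minus q J)) \<and>
            reduces (Gq_empty S q) (tau_minus q J \<cdot> gen s)
              (scal ((-1) ^ card {j\<in>J. s < j}) (tau_minus q (J \<union> {s}))
               + scal ((-1) ^ (card J + 1)) (tau_plus q J)))"
proof -
  have fJ: "finite J" using assms finite_subset by blast
  have fJs: "finite (J \<union> {s})" using fJ by simp
  have R: "\<And>e. reduces (Gq_empty S q) (tau q e J \<cdot> gen s) (\<Sum>I\<in>Fam J e. scal (cf q J I) (Wd s (J - I) {} + Ct q s (J - I) {}))"
    by (rule main_red[OF assms])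
  show ?thesis
  proof (intro conjI impI)
    assume sJ: "s \<in> J"
    show "reduces (Gq_empty S q) (tau_plus q J \<cdot> gen s) (scal ((-1) ^ (card J + 1) * q) (tau_minus q J))"
      using R[of True] unfolding case_in[OF fJ sJ] tau_plus_eq[OF fJ] tau_minus_eq[OF fJ] by simp
    show "reduces (Gq_empty S q) (tau_minus q J \<cdot> gen s) (scal ((-1) ^ (card J + 1)) (tau_plus q J))"
      using R[of False] unfolding case_in[OF fJ sJ] tau_plus_eq[OF fJ] tau_minus_eq[OF fJ] by simp
  next
    assume sJ: "s \<notin> J"
    show "reduces (Gq_empty S q) (tau_plus q J \<cdot> gen s)
              (scal ((-1) ^ card {j\<in>J. s < j}) (tau_plus q (J \<union> {s}))
               + scal ((-1) ^ (card J + 1) * q) (tau_minus q J))"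
      using R[of True] unfolding case_notin[OF fJ sJ] tau_plus_eq[OF fJ] tau_minus_eq[OF fJ] tau_plus_eq[OF fJs] by simp
    show "reduces (Gq_empty S q) (tau_minus q J \<cdot> gen s)
              (scal ((-1) ^ card {j\<in>J. s < j}) (tau_minus q (J \<union> {s}))
               + scal ((-1) ^ (card J + 1)) (tau_plus q J))"
      using R[of False] unfolding case_notin[OF fJ sJ] tau_plus_eq[OF fJ] tau_minus_eq[OF fJ] tau_minus_eq[OF fJs] by simp
  qed
qed


end
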